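(* Let $\delta:\mathbb{R}_+\to\mathbb{R}_+\cup\{+\infty\}$ be such that $\phi(t)=\int_0^\infty\exp(tx-2\delta(x))\,dx$ is finite for all $t\in\mathbb{R}$, and set $\psi(t)=t\phi(t)$ for $t\ge0$ (an increasing function with inverse $\psi^{-1}$). Let $\sigma$ be a probability measure on $\mathbb{R}$ with $d\sigma=e^{-g(x)}dx$, where $g:\mathbb{R}\to\mathbb{R}\cup\{+\infty\}$ satisfies $\frac{g(x)+g(y)}{2}-g(\frac{x+y}{2})\ge\delta(|x-y|)\ge0$ for all $x,y\in\mathbb{R}$. Then for every Borel $A\subset\mathbb{R}$, $$\sigma^+(A)\ \ge\ \widetilde{\sigma(A)}\;\psi^{-1}\Big(\frac{1}{2\widetilde{\sigma(A)}}\Big).$$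
   Context: $\sigma^+(A)=\liminf_{\varepsilon\to0^+}\frac{\sigma(A_\varepsilon)-\sigma(A)}{\varepsilon}$ with $A_\varepsilon=\{x:\exists y\in A,|x-y|<\varepsilon\}$; $\widetilde{\sigma(A)}=\min(\sigma(A),1-\sigma(A))$. The left-hand side of the convexity condition is $+\infty$ whenever $g(x)$ or $g(y)$ is $+\infty$. *)

theory Defs
  imports "HOL-Probability.Probability"
begin

definition phi_integrand :: "(real \<Rightarrow> ereal) \<Rightarrow> real \<Rightarrow> real \<Rightarrow> ennreal" where
  "phi_integrand \<delta> t x =
     (if \<delta> x = \<infinity> then 0 else ennreal (exp (t * x - 2 * real_of_ereal (\<delta> x))))"

definition phi :: "(real \<Rightarrow> ereal) \<Rightarrow> real \<Rightarrow> ennreal" where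
  "phi \<delta> t = (\<integral>\<^sup>+ x \<in> {0..}. phi_integrand \<delta> t x \<partial>lborel)"

text \<open>psi(t) = t phi(t) (used for t >= 0, where phi is assumed finite).\<close>
definition psi :: "(real \<Rightarrow> ereal) \<Rightarrow> real \<Rightarrow> real" where
  "psi \<delta> t = t * enn2real (phi \<delta> t)"

definition dens :: "(real \<Rightarrow> ereal) \<Rightarrow> real \<Rightarrow> ennreal" where
  "dens g x = (if g x = \<infinity> then 0 else ennreal (exp (- real_of_ereal (g x))))"

definition sigma_g :: "(real \<Rightarrow> ereal) \<Rightarrow> real measure" where
  "sigma_g g = density lborel (dens g)"

definition nbhd :: "real set \<Rightarrow> real \<Rightarrow> real set" where
  "nbhd A \<epsilon> = {x. \<exists>y\<in>A. \<bar>x - y\<bar> < \<epsilon>}"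

definition boundary_measure :: "real measure \<Rightarrow> real set \<Rightarrow> ereal" where
  "boundary_measure M A =
     Liminf (at_right 0) (\<lambda>\<epsilon>. ereal ((measure M (nbhd A \<epsilon>) - measure M A) / \<epsilon>))"

definition tilde :: "real \<Rightarrow> real" where
  "tilde s = min s (1 - s)"

end

theory Submission
  imports Defs
begin



lemma emeasure_lebesgue_borel_set:
  assumes "S \<in> sets borel"
  shows "emeasure lebesgue S = emeasure lborel S"
  using assms by (simp add: emeasure_completion main_part_sets)

lemma steinhaus_sum:
  fixes K :: "real set"
  assumes K: "compact K" and pos: "emeasure lborel K > 0"
  shows "\<exists>c0 r. r > 0 \<and> (\<forall>c. \<bar>c - c0\<bar> < r \<longrightarrow> (\<exists>x\<in>K. c - x \<in> K))"
proof -
  have Km[measurable]: "K \<in> sets borel"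
    using K by (simp add: borel_closed compact_imp_closed)
  have pf: "pair_sigma_finite lborel lborel" by (simp add: pair_sigma_finite_def lborel.sigma_finite_measure_axioms)
  have meas: "case_prod (\<lambda>x c. indicator K x * indicator K (c - x) :: ennreal) \<in> borel_measurable (lborel \<Otimes>\<^sub>M lborel)"
    by measurable
  have inner: "(\<integral>\<^sup>+c. indicator K (c - x) \<partial>lborel) = emeasure lborel K" for x :: real
  proof -
    have "(\<integral>\<^sup>+c. indicator K c \<partial>lborel) = ennreal \<bar>1\<bar> * (\<integral>\<^sup>+c. indicator K (-x + 1 * c) \<partial>lborel)"
      by (rule nn_integral_real_affine) auto
    then show ?thesis by simp
  qed
  have "(\<integral>\<^sup>+c. (\<integral>\<^sup>+x. indicator K x * indicator K (c - x) \<partial>lborel) \<partial>lborel)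
      = (\<integral>\<^sup>+x. (\<integral>\<^sup>+c. indicator K x * indicator K (c - x) \<partial>lborel) \<partial>lborel)"
    by (rule pair_sigma_finite.Fubini'[OF pf meas])
  also have "\<dots> = (\<integral>\<^sup>+x. indicator K x * emeasure lborel K \<partial>lborel)"
    by (subst nn_integral_cmult) (auto simp: inner)
  also have "\<dots> = emeasure lborel K * emeasure lborel K"
    by (subst nn_integral_multc) auto
  finally have tot: "(\<integral>\<^sup>+c. (\<integral>\<^sup>+x. indicator K x * indicator K (c - x) \<partial>lborel) \<partial>lborel) = emeasure lborel K * emeasure lborel K" .
  have "\<exists>c0. (\<integral>\<^sup>+x. indicator K x * indicator K (c0 - x) \<partial>lborel) \<noteq> 0"
  proof (rule ccontr)
    assume "\<not> ?thesis"
    then have "(\<integral>\<^sup>+c. (\<integral>\<^sup>+x. indicator K x * indicator K (c - x) \<partial>lborel) \<partial>lborel) = 0" by simp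
    with tot pos show False by simp
  qed
  then obtain c0 where c0: "(\<integral>\<^sup>+x. indicator K x * indicator K (c0 - x) \<partial>lborel) \<noteq> 0" by blast
  define L where "L = K \<inter> (\<lambda>x. c0 - x) -` K"
  have Lcl: "closed ((\<lambda>x. c0 - x) -` K)"
    by (rule continuous_closed_vimage) (auto simp: K compact_imp_closed intro!: continuous_intros)
  have Lc: "compact L" unfolding L_def using K Lcl by (rule compact_Int_closed)
  have "(\<integral>\<^sup>+x. indicator K x * indicator K (c0 - x) \<partial>lborel) = (\<integral>\<^sup>+x. indicator L x \<partial>lborel)"
    by (intro nn_integral_cong) (auto simp: L_def indicator_def)
  also have "\<dots> = emeasure lborel L"
    using Lc by (simp add: borel_closed compact_imp_closed)
  finally have "emeasure lborel L \<noteq> 0" using c0 by simp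
  then have "emeasure lebesgue L \<noteq> 0"
    using Lc by (simp add: emeasure_lebesgue_borel_set borel_closed compact_imp_closed)
  moreover have Llm: "L \<in> lmeasurable" using Lc by (rule lmeasurable_compact)
  ultimately have mLpos: "measure lebesgue L > 0"
    by (metis emeasure_eq_measure2 ennreal_0 fmeasurableD2 measure_nonneg order_le_less)
  have Lne: "L \<noteq> {}" using mLpos by auto
  obtain V where V: "open V" "L \<subseteq> V" "(V - L) \<in> lmeasurable" "emeasure lebesgue (V - L) < ennreal (measure lebesgue L)"
    using sets_lebesgue_outer_open[of L "measure lebesgue L"] Llm mLpos by (auto simp: fmeasurableD)
  have mVL: "measure lebesgue (V - L) < measure lebesgue L"
    using V(3,4) by (metis emeasure_eq_measure2 ennreal_less_iff measure_nonneg)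
  have Vlm: "V \<in> lmeasurable"
  proof -
    have "V = L \<union> (V - L)" using V(2) by auto
    then show ?thesis using Llm V(3) by (metis fmeasurable.Un)
  qed
  have mV: "measure lebesgue V = measure lebesgue L + measure lebesgue (V - L)"
  proof -
    have "V = L \<union> (V - L)" using V(2) by auto
    then have "measure lebesgue V = measure lebesgue (L \<union> (V - L))" by simp
    also have "\<dots> = measure lebesgue L + measure lebesgue (V - L)"
      using measure_Un3[OF Llm V(3)] by (simp add: Int_Diff)
    finally show ?thesis .
  qed
  have nV: "- V \<noteq> {}"
  proof
    assume "- V = {}"
    then have "V = UNIV" by auto
    with Vlm show False by simp
  qed
  define r where "r = setdist L (- V)"
  have rpos: "r > 0"
    unfolding r_def using Lc V(1,2) nV Lne by (subst setdist_gt_0_compact_closed) auto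
  have shift: "(+) d ` L \<subseteq> V" if "\<bar>d\<bar> < r" for d
  proof
    fix y assume "y \<in> (+) d ` L"
    then obtain x where x: "x \<in> L" "y = d + x" by auto
    show "y \<in> V"
    proof (rule ccontr)
      assume "y \<notin> V"
      then have "r \<le> dist x y" unfolding r_def by (intro setdist_le_dist) (use x in auto)
      with that x show False by (simp add: dist_real_def)
    qed
  qed
  have meet: "L \<inter> (+) d ` L \<noteq> {}" if "\<bar>d\<bar> < r" for d
  proof
    assume dis: "L \<inter> (+) d ` L = {}"
    have dlm: "(+) d ` L \<in> lmeasurable"
      using Lc by (intro lmeasurable_compact compact_translation)
    have "measure lebesgue (L \<union> (+) d ` L) = measure lebesgue L + measure lebesgue ((+) d ` L)"
      using measure_Un3[OF Llm dlm] dis by simp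
    also have "\<dots> = 2 * measure lebesgue L" by (simp add: measure_translation)
    finally have e1: "measure lebesgue (L \<union> (+) d ` L) = 2 * measure lebesgue L" .
    have "measure lebesgue (L \<union> (+) d ` L) \<le> measure lebesgue V"
      by (rule measure_mono_fmeasurable) (use V(2) shift[OF that] Vlm Llm dlm in \<open>auto simp: fmeasurableD\<close>)
    with e1 mV mVL show False by simp
  qed
  show ?thesis
  proof (intro exI conjI allI impI)
    show "r > 0" by (rule rpos)
    fix c assume "\<bar>c - c0\<bar> < r"
    then obtain y where y: "y \<in> L" "y \<in> (+) (c - c0) ` L" using meet by blast
    then obtain x' where x': "x' \<in> L" "y = c - c0 + x'" by auto
    show "\<exists>x\<in>K. c - x \<in> K"
      using y x' by (intro bexI[of _ y]) (auto simp: L_def)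
  qed
qed


lemma initial_ball:
  fixes g :: "real \<Rightarrow> ereal"
  assumes gm[measurable]: "g \<in> borel_measurable borel"
    and ninf: "\<And>x. g x \<noteq> -\<infinity>"
    and mid: "\<And>x y B. g x \<le> ereal B \<Longrightarrow> g y \<le> ereal B \<Longrightarrow> g ((x+y)/2) \<le> ereal B"
    and pos: "emeasure lborel {x. g x \<noteq> \<infinity>} \<noteq> 0"
  shows "\<exists>p r B. r > 0 \<and> (\<forall>y. \<bar>y - p\<bar> < r \<longrightarrow> g y \<le> ereal B)"
proof -
  define S where "S n = {x. \<bar>x\<bar> \<le> real n \<and> g x \<le> ereal (real n)}" for n :: nat
  have Sm[measurable]: "S n \<in> sets borel" for n unfolding S_def by measurable
  have cover: "{x. g x \<noteq> \<infinity>} \<subseteq> (\<Union>n. S n)"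
  proof
    fix x assume "x \<in> {x. g x \<noteq> \<infinity>}"
    then obtain X where X: "g x = ereal X" using ninf[of x] by (cases "g x") auto
    obtain n :: nat where "max \<bar>x\<bar> X \<le> real n" using real_arch_simple by blast
    then have "x \<in> S n" unfolding S_def using X by auto
    then show "x \<in> (\<Union>n. S n)" by blast
  qed
  have "\<exists>n. emeasure lborel (S n) \<noteq> 0"
  proof (rule ccontr)
    assume "\<not> ?thesis"
    then have "emeasure lborel (\<Union>n. S n) = 0" by (intro emeasure_UN_eq_0) auto
    then have "emeasure lborel {x. g x \<noteq> \<infinity>} = 0"
      using emeasure_mono[OF cover, of lborel] by (simp add: sets.countable_UN)
    with pos show False by simp
  qed
  then obtain n where n: "emeasure lborel (S n) \<noteq> 0" by blast
  have Sb: "S n \<subseteq> {-real n..real n}" unfolding S_def by auto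
  have Sleb: "S n \<in> sets lebesgue" using Sm[of n] by auto
  have Slm: "S n \<in> lmeasurable"
    by (rule fmeasurableI2[of "{-real n..real n}"]) (use Sb Sleb in auto)
  have "emeasure lebesgue (S n) \<noteq> 0" using n by (simp add: emeasure_lebesgue_borel_set)
  then have mS: "measure lebesgue (S n) > 0"
    using Slm by (metis emeasure_eq_measure2 ennreal_0 measure_nonneg order_le_less)
  obtain T where T: "closed T" "T \<subseteq> S n" "S n - T \<in> lmeasurable"
      "emeasure lebesgue (S n - T) < ennreal (measure lebesgue (S n) / 2)"
    using sets_lebesgue_inner_closed[OF Sleb, of "measure lebesgue (S n) / 2"] mS by auto
  have mST: "measure lebesgue (S n - T) < measure lebesgue (S n) / 2"
    using T(3,4) by (metis emeasure_eq_measure2 ennreal_less_iff measure_nonneg)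
  have Tc: "compact T"
  proof -
    have "T = T \<inter> {-real n..real n}" using T(2) Sb by auto
    then show ?thesis using T(1) by (metis closed_Int_compact compact_Icc)
  qed
  have Tlm: "T \<in> lmeasurable" using Tc by (rule lmeasurable_compact)
  have "measure lebesgue (S n - T) = measure lebesgue (S n) - measure lebesgue T"
    using T(2) Slm Tlm by (intro measure_Diff) (auto simp: fmeasurable_def)
  then have "measure lebesgue T > 0" using mST mS by simp
  then have "emeasure lebesgue T > 0" using Tlm by (simp add: emeasure_eq_measure2)
  then have "emeasure lborel T > 0" using T(1) by (simp add: emeasure_lebesgue_borel_set borel_closed)
  then obtain c0 r where cr: "r > 0" "\<forall>c. \<bar>c - c0\<bar> < r \<longrightarrow> (\<exists>x\<in>T. c - x \<in> T)"
    using steinhaus_sum[OF Tc] by blast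
  show ?thesis
  proof (intro exI conjI allI impI)
    show "r/2 > 0" using cr by simp
    fix y assume "\<bar>y - c0/2\<bar> < r/2"
    moreover have "\<bar>2*y - c0\<bar> = 2 * \<bar>y - c0/2\<bar>" by (simp add: abs_if)
    ultimately have "\<bar>2*y - c0\<bar> < r" by simp
    then obtain x where x: "x \<in> T" "2*y - x \<in> T" using cr by blast
    then have "g x \<le> ereal (real n)" "g (2*y - x) \<le> ereal (real n)" using T(2) unfolding S_def by auto
    then have "g ((x + (2*y - x))/2) \<le> ereal (real n)" by (rule mid)
    then show "g y \<le> ereal (real n)" by simp
  qed
qed



locale midconv =
  fixes g :: "real \<Rightarrow> ereal"
  assumes ninf: "\<And>x. g x \<noteq> -\<infinity>"
    and midc: "\<And>x y. g x \<noteq> \<infinity> \<Longrightarrow> g y \<noteq> \<infinity> \<Longrightarrow> g ((x+y)/2) \<le> (g x + g y)/2"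
begin

definition "D = {x. \<exists>a b. a < x \<and> x < b \<and> g a \<noteq> \<infinity> \<and> g b \<noteq> \<infinity>}"
definition "G x = real_of_ereal (g x)"

lemma fin_eq: "g x \<noteq> \<infinity> \<Longrightarrow> g x = ereal (G x)"
  using ninf[of x] by (cases "g x") (auto simp: G_def)

lemma mid_le:
  assumes "g x \<le> ereal B" "g y \<le> ereal B"
  shows "g ((x+y)/2) \<le> ereal B"
proof -
  have fx: "g x \<noteq> \<infinity>" "g y \<noteq> \<infinity>" using assms by auto
  then have "g ((x+y)/2) \<le> (ereal (G x) + ereal (G y))/2" using midc fin_eq by metis
  also have "\<dots> = ereal ((G x + G y)/2)" by simp
  also have "\<dots> \<le> ereal B" using assms fin_eq[OF fx(1)] fin_eq[OF fx(2)] by simp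
  finally show ?thesis .
qed

lemma G_mid:
  assumes "g x \<noteq> \<infinity>" "g y \<noteq> \<infinity>"
  shows "g ((x+y)/2) \<noteq> \<infinity> \<and> G ((x+y)/2) \<le> (G x + G y)/2"
proof -
  have "g ((x+y)/2) \<le> ereal ((G x + G y)/2)"
    using midc[OF assms] fin_eq[OF assms(1)] fin_eq[OF assms(2)] by simp
  moreover then have "g ((x+y)/2) \<noteq> \<infinity>" by auto
  ultimately show ?thesis using fin_eq by (metis ereal_less_eq(3))
qed

lemma toward:
  assumes bp: "\<forall>y. \<bar>y - p\<bar> < r \<longrightarrow> g y \<le> ereal B" and q: "g q \<le> ereal B"
  shows "\<bar>y - (q + (p - q)/2^n)\<bar> < r/2^n \<Longrightarrow> g y \<le> ereal B"
proof (induction n arbitrary: y)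
  case 0
  then show ?case using bp by simp
next
  case (Suc n)
  define y' where "y' = 2*y - q"
  have "\<bar>y' - (q + (p - q)/2^n)\<bar> = 2 * \<bar>y - (q + (p - q)/2^Suc n)\<bar>"
    unfolding y'_def by (simp add: field_simps abs_mult[symmetric])
  also have "\<dots> < 2 * (r / 2^Suc n)" using Suc.prems by simp
  also have "\<dots> = r/2^n" by simp
  finally have "g y' \<le> ereal B" using Suc.IH by blast
  then have "g ((y' + q)/2) \<le> ereal B" using q by (rule mid_le)
  moreover have "(y' + q)/2 = y" unfolding y'_def by simp
  ultimately show ?case by simp
qed

lemma dyadic:
  assumes b1: "\<forall>y. \<bar>y - p1\<bar> < r \<longrightarrow> g y \<le> ereal B" and b2: "\<forall>y. \<bar>y - p2\<bar> < r \<longrightarrow> g y \<le> ereal B"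
  shows "k \<le> 2^n \<Longrightarrow> \<bar>y - (p1 + real k * (p2 - p1) / 2^n)\<bar> < r \<Longrightarrow> g y \<le> ereal B"
proof (induction n arbitrary: k y)
  case 0
  then have "k = 0 \<or> k = 1" by auto
  then show ?case using 0 b1 b2 by auto
next
  case (Suc n)
  show ?case
  proof (cases "even k")
    case True
    then obtain j where j: "k = 2*j" by auto
    have "j \<le> 2^n" using Suc.prems(1) j by simp
    moreover have "p1 + real k * (p2 - p1) / 2^Suc n = p1 + real j * (p2 - p1) / 2^n"
      using j by (simp add: field_simps)
    ultimately show ?thesis using Suc by metis
  next
    case False
    then obtain j where j: "k = 2*j + 1" by (metis oddE)
    have j1: "j \<le> 2^n" "Suc j \<le> 2^n" using Suc.prems(1) j by auto
    define h where "h = (p2 - p1) / 2^Suc n"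
    have e1: "p1 + real j * (p2 - p1) / 2^n = p1 + real k * (p2 - p1) / 2^Suc n - h"
      using j unfolding h_def by (simp add: field_simps)
    have e2: "p1 + real (Suc j) * (p2 - p1) / 2^n = p1 + real k * (p2 - p1) / 2^Suc n + h"
      using j unfolding h_def by (simp add: field_simps)
    have "g (y - h) \<le> ereal B"
      using Suc.IH[OF j1(1), of "y - h"] Suc.prems(2) e1 by simp
    moreover have "g (y + h) \<le> ereal B"
      using Suc.IH[OF j1(2), of "y + h"] Suc.prems(2) e2 by simp
    ultimately have "g (((y - h) + (y + h))/2) \<le> ereal B" by (rule mid_le)
    then show ?thesis by simp
  qed
qed

lemma D_between: "x \<in> D \<Longrightarrow> y \<in> D \<Longrightarrow> x \<le> z \<Longrightarrow> z \<le> y \<Longrightarrow> z \<in> D"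
  unfolding D_def by (auto, meson le_less_trans less_le_trans)

lemma bounded_at_D:
  assumes r: "r > 0" and bp: "\<forall>y. \<bar>y - p\<bar> < r \<longrightarrow> g y \<le> ereal B" and x: "x \<in> D"
  shows "\<exists>r' B'. r' > 0 \<and> (\<forall>y. \<bar>y - x\<bar> < r' \<longrightarrow> g y \<le> ereal B')"
proof -
  obtain a b where ab: "a < x" "x < b" "g a \<noteq> \<infinity>" "g b \<noteq> \<infinity>" using x unfolding D_def by auto
  have "\<exists>p1 p2 \<rho> B1. \<rho> > 0 \<and> p1 \<le> x \<and> x \<le> p2 \<and> p1 < p2 \<and>
      (\<forall>y. \<bar>y - p1\<bar> < \<rho> \<longrightarrow> g y \<le> ereal B1) \<and> (\<forall>y. \<bar>y - p2\<bar> < \<rho> \<longrightarrow> g y \<le> ereal B1)"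
  proof (cases "p < x")
    case True
    define B1 where "B1 = max B (G b)"
    have bp1: "\<forall>y. \<bar>y - p\<bar> < r \<longrightarrow> g y \<le> ereal B1" using bp unfolding B1_def
      by (meson ereal_less_eq(3) max.cobounded1 order_trans)
    have gb: "g b \<le> ereal B1" using fin_eq[OF ab(4)] unfolding B1_def by simp
    have "b - p > 0" "b - x > 0" using True ab by auto
    obtain n where n: "(1/2::real)^n < (b - x)/(b - p)"
      using real_arch_pow_inv[of "(b - x)/(b - p)" "1/2"] \<open>b - p > 0\<close> \<open>b - x > 0\<close> by auto
    define p2 where "p2 = b + (p - b)/2^n"
    have "(b - p)/2^n < b - x"
      using n \<open>b - p > 0\<close> by (simp add: field_simps power_divide)
    then have p2x: "x < p2" unfolding p2_def by (simp add: field_simps)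
    have bd2: "\<forall>y. \<bar>y - p2\<bar> < r/2^n \<longrightarrow> g y \<le> ereal B1"
      using toward[OF bp1 gb] unfolding p2_def by blast
    have "r/2^n \<le> r" using r by (simp add: field_simps)
    then have bd1: "\<forall>y. \<bar>y - p\<bar> < r/2^n \<longrightarrow> g y \<le> ereal B1" using bp1 by auto
    show ?thesis
      by (rule exI[of _ p], rule exI[of _ p2], rule exI[of _ "r/2^n"], rule exI[of _ B1])
         (use r True p2x bd1 bd2 in auto)
  next
    case False
    define B1 where "B1 = max B (G a)"
    have bp1: "\<forall>y. \<bar>y - p\<bar> < r \<longrightarrow> g y \<le> ereal B1" using bp unfolding B1_def
      by (meson ereal_less_eq(3) max.cobounded1 order_trans)
    have ga: "g a \<le> ereal B1" using fin_eq[OF ab(3)] unfolding B1_def by simp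
    have "p - a > 0" "x - a > 0" using False ab by auto
    obtain n where n: "(1/2::real)^n < (x - a)/(p - a)"
      using real_arch_pow_inv[of "(x - a)/(p - a)" "1/2"] \<open>p - a > 0\<close> \<open>x - a > 0\<close> by auto
    define p1 where "p1 = a + (p - a)/2^n"
    have "(p - a)/2^n < x - a"
      using n \<open>p - a > 0\<close> by (simp add: field_simps power_divide)
    then have p1x: "p1 < x" unfolding p1_def by (simp add: field_simps)
    have bd1: "\<forall>y. \<bar>y - p1\<bar> < r/2^n \<longrightarrow> g y \<le> ereal B1"
      using toward[OF bp1 ga] unfolding p1_def by blast
    have "r/2^n \<le> r" using r by (simp add: field_simps)
    then have bd2: "\<forall>y. \<bar>y - p\<bar> < r/2^n \<longrightarrow> g y \<le> ereal B1" using bp1 by auto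
    show ?thesis
      by (rule exI[of _ p1], rule exI[of _ p], rule exI[of _ "r/2^n"], rule exI[of _ B1])
         (use r False p1x bd1 bd2 in auto)
  qed
  then obtain p1 p2 \<rho> B1 where P: "\<rho> > 0" "p1 \<le> x" "x \<le> p2" "p1 < p2"
    "\<forall>y. \<bar>y - p1\<bar> < \<rho> \<longrightarrow> g y \<le> ereal B1" "\<forall>y. \<bar>y - p2\<bar> < \<rho> \<longrightarrow> g y \<le> ereal B1"
    by blast
  define L where "L = p2 - p1"
  have L: "L > 0" using P unfolding L_def by simp
  obtain n where n: "(1/2::real)^n < \<rho> / L"
    using real_arch_pow_inv[of "\<rho>/L" "1/2"] P(1) L by auto
  have stepsmall: "L / 2^n < \<rho>" using n L by (simp add: field_simps power_divide)
  define q where "q = (x - p1) * 2^n / L"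
  define k where "k = nat \<lfloor>q\<rfloor>"
  have q0: "q \<ge> 0" unfolding q_def using P L by simp
  have q1: "q \<le> 2^n" unfolding q_def using P L by (simp add: field_simps L_def)
  have kq: "real k \<le> q" "q < real k + 1" unfolding k_def using q0 by linarith+
  have k2: "k \<le> 2^n"
  proof -
    have "real k \<le> 2^n" using kq q1 by linarith
    then show ?thesis by (metis of_nat_le_iff of_nat_numeral of_nat_power)
  qed
  define c where "c = p1 + real k * (p2 - p1) / 2^n"
  have "c \<le> x"
  proof -
    have "real k * L / 2^n \<le> q * L / 2^n" using kq L by (simp add: divide_right_mono)
    also have "\<dots> = x - p1" unfolding q_def using L by simp
    finally show ?thesis unfolding c_def L_def by simp
  qed
  moreover have "x < c + L / 2^n"
  proof -
    have "x - p1 = q * L / 2^n" unfolding q_def using L by simp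
    also have "\<dots> < (real k + 1) * L / 2^n" using kq L by (simp add: divide_strict_right_mono)
    finally have "x - p1 < (real k + 1) * L / 2^n" .
    moreover have "c + L / 2^n = p1 + (real k + 1) * L / 2^n" unfolding c_def L_def by (simp add: field_simps)
    ultimately show ?thesis by linarith
  qed
  ultimately have xc: "\<bar>x - c\<bar> < \<rho>" using stepsmall by auto
  show ?thesis
  proof (intro exI conjI allI impI)
    show "\<rho> - \<bar>x - c\<bar> > 0" using xc by simp
    fix y assume "\<bar>y - x\<bar> < \<rho> - \<bar>x - c\<bar>"
    then have "\<bar>y - c\<bar> < \<rho>" by linarith
    then show "g y \<le> ereal B1" using dyadic[OF P(5) P(6) k2] unfolding c_def by blast
  qed
qed

lemma cont_at:
  assumes r: "r > 0" and bp: "\<forall>y. \<bar>y - x\<bar> < r \<longrightarrow> g y \<le> ereal B"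
  shows "isCont G x"
proof -
  have "g x \<le> ereal B" using bp r by simp
  then have gx: "g x \<noteq> \<infinity>" by auto
  have fin: "g y \<noteq> \<infinity>" if "\<bar>y - x\<bar> < r" for y
  proof -
    have "g y \<le> ereal B" using bp that by simp
    then show ?thesis by auto
  qed
  have GB: "G y \<le> B" if "\<bar>y - x\<bar> < r" for y using bp that fin_eq[OF fin[OF that]] by (metis ereal_less_eq(3))
  have up: "\<bar>h\<bar> < r/2^n \<Longrightarrow> G (x+h) \<le> G x + (B - G x)/2^n" for n h
  proof (induction n arbitrary: h)
    case 0 then show ?case using GB[of "x+h"] by simp
  next
    case (Suc n)
    have h2: "\<bar>2*h\<bar> < r/2^n" using Suc.prems by simp
    have "r/2^n \<le> r" using r by (simp add: field_simps)
    then have f2: "g (x + 2*h) \<noteq> \<infinity>" using fin[of "x + 2*h"] h2 by simp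
    have "G ((x + (x + 2*h))/2) \<le> (G x + G (x + 2*h))/2" using G_mid[OF gx f2] by blast
    moreover have "(x + (x + 2*h))/2 = x + h" by simp
    ultimately have "G (x + h) \<le> (G x + G (x + 2*h))/2" by metis
    also have "\<dots> \<le> (G x + (G x + (B - G x)/2^n))/2" using Suc.IH[OF h2] by (intro divide_right_mono) auto
    also have "\<dots> = G x + (B - G x)/2^Suc n" by (simp add: field_simps)
    finally show ?case .
  qed
  have low: "\<bar>h\<bar> < r/2^n \<Longrightarrow> G (x+h) \<ge> G x - (B - G x)/2^n" for n h
  proof -
    assume h: "\<bar>h\<bar> < r/2^n"
    have "r/2^n \<le> r" using r by (simp add: field_simps)
    then have f1: "g (x + h) \<noteq> \<infinity>" "g (x - h) \<noteq> \<infinity>" using fin h by auto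
    have "G (((x + h) + (x - h))/2) \<le> (G (x+h) + G (x-h))/2" using G_mid[OF f1] by blast
    moreover have "((x + h) + (x - h))/2 = x" by simp
    ultimately have "G x \<le> (G (x+h) + G (x-h))/2" by metis
    moreover have "G (x - h) \<le> G x + (B - G x)/2^n" using up[of "-h" n] h by simp
    ultimately show ?thesis by simp
  qed
  have BG: "B - G x \<ge> 0" using GB[of x] r by simp
  show ?thesis unfolding continuous_at_eps_delta
  proof (intro allI impI)
    fix e :: real assume e: "e > 0"
    obtain n where n: "(1/2::real)^n < e / (B - G x + 1)"
      using real_arch_pow_inv[of "e / (B - G x + 1)" "1/2"] e BG by auto
    have "(B - G x)/2^n < e"
    proof -
      have "(B - G x)/2^n \<le> (B - G x + 1)/2^n" by (simp add: divide_right_mono)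
      also have "\<dots> < e" using n BG by (simp add: field_simps power_divide)
      finally show ?thesis .
    qed
    then show "\<exists>d>0. \<forall>x'. dist x' x < d \<longrightarrow> dist (G x') (G x) < e"
    proof (intro exI[of _ "r/2^n"] conjI allI impI)
      show "r/2^n > 0" using r by simp
      fix x' assume "dist x' x < r/2^n"
      then have hh: "\<bar>x' - x\<bar> < r/2^n" by (simp add: dist_real_def)
      have "G (x + (x' - x)) \<le> G x + (B - G x)/2^n" by (rule up[OF hh])
      moreover have "G (x + (x' - x)) \<ge> G x - (B - G x)/2^n" by (rule low[OF hh])
      ultimately have "\<bar>G x' - G x\<bar> \<le> (B - G x)/2^n" by simp
      then show "dist (G x') (G x) < e" using \<open>(B - G x)/2^n < e\<close> by (simp add: dist_real_def)
    qed
  qed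
qed

end


locale midconv_b = midconv +
  assumes bnd: "\<exists>p r B. r > 0 \<and> (\<forall>y. \<bar>y - p\<bar> < r \<longrightarrow> g y \<le> ereal B)"
begin

lemma D_bounded: "x \<in> D \<Longrightarrow> \<exists>r B. r > 0 \<and> (\<forall>y. \<bar>y - x\<bar> < r \<longrightarrow> g y \<le> ereal B)"
  using bnd bounded_at_D by blast

lemma D_fin: "x \<in> D \<Longrightarrow> g x \<noteq> \<infinity>"
proof -
  assume "x \<in> D"
  then obtain r B where "r > 0" "\<forall>y. \<bar>y - x\<bar> < r \<longrightarrow> g y \<le> ereal B" using D_bounded by blast
  then have "g x \<le> ereal B" by simp
  then show ?thesis by auto
qed

lemma D_cont: "x \<in> D \<Longrightarrow> isCont G x"
  using D_bounded cont_at by blast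

lemma chord:
  assumes a: "a \<in> D" and b: "b \<in> D" and ab: "a < b" and x: "x \<in> {a..b}"
  shows "G x \<le> G a + (G b - G a) * (x - a) / (b - a)"
proof (rule ccontr)
  assume neg: "\<not> ?thesis"
  define k where "k = (G b - G a) / (b - a)"
  define h where "h y = G y - (G a + k * (y - a))" for y
  have sub: "{a..b} \<subseteq> D" using D_between[OF a b] by auto
  have hc: "continuous_on {a..b} h"
    unfolding h_def using sub D_cont ab
    by (intro continuous_at_imp_continuous_on ballI continuous_intros) auto
  have hmid: "h ((y+z)/2) \<le> (h y + h z)/2" if "y \<in> {a..b}" "z \<in> {a..b}" for y z
  proof -
    have "G ((y+z)/2) \<le> (G y + G z)/2" using G_mid D_fin sub that by blast
    moreover have "h ((y+z)/2) = G ((y+z)/2) - G a - (k*(y-a) + k*(z-a))/2"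
      unfolding h_def by (simp add: field_simps)
    moreover have "(h y + h z)/2 = (G y + G z)/2 - G a - (k*(y-a) + k*(z-a))/2"
      unfolding h_def by (simp add: field_simps)
    ultimately show ?thesis by linarith
  qed
  have hx: "h x > 0" using neg unfolding h_def k_def by simp
  obtain xm where xm: "xm \<in> {a..b}" "\<forall>y\<in>{a..b}. h y \<le> h xm"
    using continuous_attains_sup[OF compact_Icc _ hc] ab by auto
  define m where "m = h xm"
  have mpos: "m > 0" using xm x hx unfolding m_def by force
  define Mx where "Mx = {y \<in> {a..b}. h y = m}"
  have Mxc: "closed Mx" unfolding Mx_def
    by (rule continuous_closed_preimage_constant[OF hc closed_atLeastAtMost])
  have Mxne: "Mx \<noteq> {}" using xm unfolding Mx_def m_def by auto
  have Mxb: "bdd_below Mx" unfolding Mx_def by (auto intro: bdd_belowI[of _ a])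
  define c where "c = Inf Mx"
  have cM: "c \<in> Mx" unfolding c_def by (rule closed_contains_Inf[OF Mxne Mxb Mxc])
  have ha: "h a = 0" and hb: "h b = 0" unfolding h_def k_def using ab by (auto simp: field_simps)
  have c_ab: "a < c" "c < b"
  proof -
    have "c \<in> {a..b}" "h c = m" using cM unfolding Mx_def by auto
    then show "a < c" "c < b" using ha hb mpos by (auto simp: order_le_less)
  qed
  define d where "d = min (c - a) (b - c)"
  have d: "d > 0" "c - d \<in> {a..b}" "c + d \<in> {a..b}" using c_ab unfolding d_def by auto
  have "h (c - d) \<le> m" using xm d unfolding m_def by auto
  moreover have "h (c - d) \<noteq> m"
  proof
    assume "h (c - d) = m"
    then have "c - d \<in> Mx" using d unfolding Mx_def by auto
    then have "c \<le> c - d" unfolding c_def using Mxb by (rule cInf_lower)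
    with d show False by simp
  qed
  ultimately have l: "h (c - d) < m" by simp
  have r: "h (c + d) \<le> m" using xm d unfolding m_def by auto
  have "h (((c - d) + (c + d))/2) \<le> (h (c - d) + h (c + d))/2" using hmid d by blast
  then have "h c < m" using l r by simp
  with cM show False unfolding Mx_def by simp
qed

lemma slope_le:
  assumes a: "a \<in> D" and b: "b \<in> D" and ay: "a < y" and yb: "y < b"
  shows "(G y - G a) / (y - a) \<le> (G b - G y) / (b - y)"
proof -
  define S where "S = (G b - G a) / (b - a)"
  have y: "y \<in> D" using D_between[OF a b] ay yb by auto
  have ch: "G y \<le> G a + S * (y - a)" using chord[OF a b _, of y] ay yb unfolding S_def by (simp add: field_simps)
  have "(G y - G a) / (y - a) \<le> S" using ch ay by (simp add: divide_le_eq mult.commute)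
  moreover have "G b = G a + S * (b - a)" unfolding S_def using ay yb by simp
  then have "S * (b - y) \<le> G b - G y" using ch by (simp add: algebra_simps)
  then have "S \<le> (G b - G y) / (b - y)" using yb by (simp add: le_divide_eq)
  ultimately show ?thesis by simp
qed

lemma support:
  assumes y: "y \<in> D"
  shows "\<exists>v. \<forall>z\<in>D. G z \<ge> G y + v * (z - y)"
proof -
  obtain a0 b0 where ab0: "a0 < y" "y < b0" "g a0 \<noteq> \<infinity>" "g b0 \<noteq> \<infinity>" using y unfolding D_def by auto
  define a1 where "a1 = (a0 + y)/2"
  define b1 where "b1 = (y + b0)/2"
  have "a0 < a1" "a1 < b0" "a1 < y" unfolding a1_def using ab0 by auto
  then have a1: "a1 \<in> D" "a1 < y" unfolding D_def using ab0 by blast+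
  have "a0 < b1" "b1 < b0" "y < b1" unfolding b1_def using ab0 by auto
  then have b1: "b1 \<in> D" "y < b1" unfolding D_def using ab0 by blast+
  define LS where "LS = (\<lambda>a. (G y - G a) / (y - a)) ` {a \<in> D. a < y}"
  have LSne: "LS \<noteq> {}" using a1 unfolding LS_def by auto
  have LSb: "\<And>s. s \<in> LS \<Longrightarrow> s \<le> (G z - G y) / (z - y)" if "z \<in> D" "y < z" for z
    using slope_le that unfolding LS_def by auto
  have LSbdd: "bdd_above LS" using LSb[OF b1] by (intro bdd_aboveI) blast
  define v where "v = Sup LS"
  show ?thesis
  proof (intro exI ballI)
    fix z assume z: "z \<in> D"
    consider "z < y" | "z = y" | "y < z" by linarith
    then show "G z \<ge> G y + v * (z - y)"
    proof cases
      case 1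
      have "(G y - G z) / (y - z) \<in> LS" unfolding LS_def using z 1 by auto
      then have "(G y - G z) / (y - z) \<le> v" unfolding v_def using LSbdd by (rule cSup_upper)
      then have "G y - G z \<le> v * (y - z)" using 1 by (simp add: divide_le_eq)
      then show ?thesis by (simp add: algebra_simps)
    next
      case 2 then show ?thesis by simp
    next
      case 3
      have "v \<le> (G z - G y) / (z - y)" unfolding v_def using LSne LSb[OF z 3] by (rule cSup_least)
      then have "v * (z - y) \<le> G z - G y" using 3 by (simp add: le_divide_eq)
      then show ?thesis by simp
    qed
  qed
qed

end



lemma nbhd_iff: "x \<in> nbhd A e \<longleftrightarrow> (\<exists>a\<in>A. \<bar>x - a\<bar> < e)"
  unfolding nbhd_def by auto

lemma nbhd_open: "open (nbhd A e)"
proof -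
  have "nbhd A e = (\<Union>a\<in>A. ball a e)" unfolding nbhd_def by (auto simp: dist_real_def abs_minus_commute)
  then show ?thesis by auto
qed

context real_distribution
begin

lemma meas_ge: "measure M {x..} = 1 - cdf M x" if "measure M {x} = 0" for x
proof -
  have "measure M {x..} = measure M (UNIV - {..<x})" by (rule arg_cong[where f="measure M"]) auto
  also have "\<dots> = 1 - measure M {..<x}" by (subst finite_measure_Diff) (auto simp: prob_space[unfolded space_eq_univ])
  also have "measure M {..x} = measure M {..<x} + measure M {x}"
    by (subst finite_measure_Union[symmetric]) (auto intro!: arg_cong[where f="measure M"])
  ultimately show ?thesis using that unfolding cdf_def by simp
qed

lemma set_arg:
  fixes A :: "real set" and \<epsilon> c t z1 z2 :: real
  assumes A: "A \<in> sets borel" and eps: "\<epsilon> > 0" and c: "c \<ge> 0"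
    and noatom: "\<And>x. measure M {x} = 0"
    and pr: "\<And>x. measure M {x<..<x+\<epsilon>} \<ge> c * min (cdf M x) (min t (1 - cdf M x))"
    and pl: "\<And>x. measure M {x-\<epsilon><..<x} \<ge> c * min (cdf M x) (min t (1 - cdf M x))"
    and z: "z1 \<le> z2" "cdf M z1 = t" "cdf M z2 = 1 - t"
    and tA: "t \<le> measure M A" "t \<le> 1 - measure M A"
  shows "measure M (nbhd A \<epsilon> - A) \<ge> c * t / (1 + c)"
proof -
  define U where "U = nbhd A \<epsilon>"
  define m where "m s = min s (min t (1 - s))" for s
  have pr': "measure M {x<..<x+\<epsilon>} \<ge> c * m (cdf M x)" for x using pr unfolding m_def .
  have pl': "measure M {x-\<epsilon><..<x} \<ge> c * m (cdf M x)" for x using pl unfolding m_def .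
  have Uo: "open U" unfolding U_def by (rule nbhd_open)
  have Um[measurable]: "U \<in> sets M" using Uo by simp
  have Am[measurable]: "A \<in> sets M" using A by simp
  have AU: "A \<subseteq> U"
  proof
    fix x assume "x \<in> A" then show "x \<in> U" unfolding U_def nbhd_iff using eps by (intro bexI[of _ x]) auto
  qed
  have inU: "y \<in> U" if "a \<in> A" "\<bar>y - a\<bar> < \<epsilon>" for a y using that unfolding U_def nbhd_iff by blast
  have far: "\<epsilon> \<le> \<bar>e - a\<bar>" if "a \<in> A" "e \<notin> U" for a e
    using inU[OF that(1), of e] that(2) by force
  have t0: "t \<ge> 0" using z(2) cdf_nonneg by metis
  have t2: "2 * t \<le> 1" using tA by simp
  have ct0: "c * t \<ge> 0" using c t0 by simp
  have fin: "c * t / (1 + c) \<le> c * t"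
  proof -
    have "c * t \<le> (1 + c) * (c * t)" using ct0 c by (simp add: distrib_right)
    then show ?thesis using c by (simp add: divide_le_eq mult.commute)
  qed
  have m_low: "m (cdf M x) = cdf M x" if "x \<le> z1" for x
  proof -
    have "cdf M x \<le> t" using cdf_nondecreasing[OF that] z(2) by simp
    then show ?thesis unfolding m_def using t2 by simp
  qed
  have m_high: "m (cdf M x) = 1 - cdf M x" if "z2 \<le> x" for x
  proof -
    have "cdf M x \<ge> 1 - t" using cdf_nondecreasing[OF that] z(3) by simp
    then show ?thesis unfolding m_def using t2 by simp
  qed
  have m_mid: "m (cdf M x) = t" if "z1 \<le> x" "x \<le> z2" for x
  proof -
    have "cdf M x \<ge> t" "cdf M x \<le> 1 - t"
      using cdf_nondecreasing[OF that(1)] cdf_nondecreasing[OF that(2)] z by auto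
    then show ?thesis unfolding m_def by simp
  qed
  have UA_m[measurable]: "U - A \<in> sets M" by measurable
  have UAb[simp]: "U - A \<in> sets borel" using Uo A by auto
  have case1: "measure M (U - A) \<ge> c * t / (1 + c)"
    if e: "e \<notin> U" "z1 \<le> e" "e \<le> z2" and P: "{e-\<epsilon><..<e} \<subseteq> U \<or> {e<..<e+\<epsilon>} \<subseteq> U" for e
  proof -
    have notA: "y \<notin> A" if "\<bar>y - e\<bar> < \<epsilon>" for y using far[of y e] e(1) that by (force simp: abs_minus_commute)
    from P show ?thesis
    proof
      assume P1: "{e-\<epsilon><..<e} \<subseteq> U"
      have "{e-\<epsilon><..<e} \<subseteq> U - A" using P1 notA by auto
      then have "measure M {e-\<epsilon><..<e} \<le> measure M (U - A)" by (intro finite_measure_mono) auto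
      moreover have "measure M {e-\<epsilon><..<e} \<ge> c * t" using pl'[of e] m_mid[OF e(2,3)] by simp
      ultimately show ?thesis using fin by linarith
    next
      assume P1: "{e<..<e+\<epsilon>} \<subseteq> U"
      have "{e<..<e+\<epsilon>} \<subseteq> U - A" using P1 notA by auto
      then have "measure M {e<..<e+\<epsilon>} \<le> measure M (U - A)" by (intro finite_measure_mono) auto
      moreover have "measure M {e<..<e+\<epsilon>} \<ge> c * t" using pr'[of e] m_mid[OF e(2,3)] by simp
      ultimately show ?thesis using fin by linarith
    qed
  qed
  have cU: "closed (- U)" using Uo by auto
  consider (I) "\<forall>z. z1 \<le> z \<and> z \<le> z2 \<longrightarrow> z \<in> U" | (II) "\<forall>z. z1 \<le> z \<and> z \<le> z2 \<longrightarrow> z \<notin> U"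
    | (III) z e where "z1 \<le> z" "z \<le> z2" "z \<in> U" "z1 \<le> e" "e \<le> z2" "e \<notin> U" by blast
  then have "measure M (U - A) \<ge> c * t / (1 + c)"
  proof cases
    case III
    note zU = III(3) and eU = III(6)
    obtain a where a: "a \<in> A" "\<bar>z - a\<bar> < \<epsilon>" using zU unfolding U_def nbhd_iff by blast
    consider "z < e" | "e < z" using zU eU by (cases "z < e") (auto simp: not_less order_le_less)
    then show ?thesis
    proof cases
      case 1
      define Ez where "Ez = - U \<inter> {z..}"
      have Ezc: "closed Ez" unfolding Ez_def using cU by auto
      have Ezne: "Ez \<noteq> {}" unfolding Ez_def using eU 1 by auto
      have Ezb: "bdd_below Ez" unfolding Ez_def by (auto intro: bdd_belowI[of _ z])
      define e' where "e' = Inf Ez"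
      have e'E: "e' \<in> Ez" unfolding e'_def by (rule closed_contains_Inf[OF Ezne Ezb Ezc])
      have e'le: "e' \<le> e" unfolding e'_def using eU 1 Ezb by (intro cInf_lower) (auto simp: Ez_def)
      have ze': "z < e'" using e'E zU unfolding Ez_def by (auto simp: order_le_less)
      have seg: "y \<in> U" if "z \<le> y" "y < e'" for y
      proof (rule ccontr)
        assume "y \<notin> U"
        then have "y \<in> Ez" unfolding Ez_def using that by auto
        then have "e' \<le> y" unfolding e'_def using Ezb by (rule cInf_lower)
        with that show False by simp
      qed
      have e'U: "e' \<notin> U" using e'E unfolding Ez_def by auto
      have "\<epsilon> \<le> \<bar>e' - a\<bar>" using far[OF a(1) e'U] .
      moreover have "\<not> a \<ge> e' + \<epsilon>" using a(2) ze' by auto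
      ultimately have ae': "a \<le> e' - \<epsilon>" by (auto simp: abs_if split: if_splits)
      have "{e'-\<epsilon><..<e'} \<subseteq> U"
      proof
        fix y assume y: "y \<in> {e'-\<epsilon><..<e'}"
        show "y \<in> U"
        proof (cases "z \<le> y")
          case True then show ?thesis using seg y by auto
        next
          case False
          then have "\<bar>y - a\<bar> < \<epsilon>" using y ae' a(2) by (auto simp: abs_if)
          then show ?thesis using inU[OF a(1)] by blast
        qed
      qed
      then show ?thesis using case1[OF e'U] ze' III(1) e'le III(5) by auto
    next
      case 2
      define Ez where "Ez = - U \<inter> {..z}"
      have Ezc: "closed Ez" unfolding Ez_def using cU by auto
      have Ezne: "Ez \<noteq> {}" unfolding Ez_def using eU 2 by auto
      have Ezb: "bdd_above Ez" unfolding Ez_def by (auto intro: bdd_aboveI[of _ z])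
      define e' where "e' = Sup Ez"
      have e'E: "e' \<in> Ez" unfolding e'_def by (rule closed_contains_Sup[OF Ezne Ezb Ezc])
      have e'le: "e \<le> e'" unfolding e'_def using eU 2 Ezb by (intro cSup_upper) (auto simp: Ez_def)
      have ze': "e' < z" using e'E zU unfolding Ez_def by (auto simp: order_le_less)
      have seg: "y \<in> U" if "y \<le> z" "e' < y" for y
      proof (rule ccontr)
        assume "y \<notin> U"
        then have "y \<in> Ez" unfolding Ez_def using that by auto
        then have "y \<le> e'" unfolding e'_def using Ezb by (rule cSup_upper)
        with that show False by simp
      qed
      have e'U: "e' \<notin> U" using e'E unfolding Ez_def by auto
      have "\<epsilon> \<le> \<bar>e' - a\<bar>" using far[OF a(1) e'U] .
      moreover have "\<not> a \<le> e' - \<epsilon>" using a(2) ze' by auto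
      ultimately have ae': "a \<ge> e' + \<epsilon>" by (auto simp: abs_if split: if_splits)
      have "{e'<..<e'+\<epsilon>} \<subseteq> U"
      proof
        fix y assume y: "y \<in> {e'<..<e'+\<epsilon>}"
        show "y \<in> U"
        proof (cases "y \<le> z")
          case True then show ?thesis using seg y by auto
        next
          case False
          then have "\<bar>y - a\<bar> < \<epsilon>" using y ae' a(2) by (auto simp: abs_if)
          then show ?thesis using inU[OF a(1)] by blast
        qed
      qed
      then show ?thesis using case1[OF e'U] ze' III(2) e'le III(4) by auto
    qed
  next
    case II
    define AL where "AL = A \<inter> {..z1}"
    define AR where "AR = A \<inter> {z2..}"
    have ALm[measurable]: "AL \<in> sets M" and ARm[measurable]: "AR \<in> sets M" unfolding AL_def AR_def by auto
    have Asub: "A \<subseteq> AL \<union> AR"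
    proof
      fix x assume x: "x \<in> A"
      then have "x \<in> U" using AU by auto
      then have "\<not> (z1 \<le> x \<and> x \<le> z2)" using II by auto
      then show "x \<in> AL \<union> AR" using x unfolding AL_def AR_def by auto
    qed
    have left: "\<exists>PL. PL \<in> sets M \<and> PL \<subseteq> U - A \<and> PL \<subseteq> {..<z1} \<and> measure M PL \<ge> c * measure M AL"
    proof (cases "AL = {}")
      case True then show ?thesis by (intro exI[of _ "{}"]) auto
    next
      case False
      have ALb: "bdd_above AL" unfolding AL_def by (auto intro: bdd_aboveI[of _ z1])
      define a1 where "a1 = Sup AL"
      have z1U: "z1 \<notin> U" using II z(1) by auto
      have a1z: "a1 \<le> z1 - \<epsilon>" unfolding a1_def
      proof (rule cSup_least[OF False])
        fix a assume "a \<in> AL"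
        then have "a \<in> A" "a \<le> z1" unfolding AL_def by auto
        then show "a \<le> z1 - \<epsilon>" using far[of a z1] z1U by (auto simp: abs_if split: if_splits)
      qed
      have upper: "a \<le> a1" if "a \<in> AL" for a unfolding a1_def using that ALb by (rule cSup_upper)
      define PL where "PL = {a1<..<a1+\<epsilon>}"
      have "PL \<subseteq> U - A"
      proof
        fix y assume y: "y \<in> PL"
        then have "y - \<epsilon> < Sup AL" unfolding PL_def a1_def by auto
        then obtain a where a: "a \<in> AL" "y - \<epsilon> < a" using less_cSup_iff[OF False ALb] by blast
        then have "\<bar>y - a\<bar> < \<epsilon>" using upper[OF a(1)] y unfolding PL_def by auto
        then have "y \<in> U" using inU a unfolding AL_def by auto
        moreover have "y \<notin> A"
        proof
          assume yA: "y \<in> A"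
          show False
          proof (cases "y \<le> z1")
            case True then have "y \<le> a1" using upper yA unfolding AL_def by auto
            then show False using y unfolding PL_def by auto
          next
            case False then show False using y a1z unfolding PL_def by auto
          qed
        qed
        ultimately show "y \<in> U - A" by auto
      qed
      moreover have "PL \<subseteq> {..<z1}" unfolding PL_def using a1z by auto
      moreover have "measure M PL \<ge> c * measure M AL"
      proof -
        have "measure M AL \<le> measure M {..a1}" using upper by (intro finite_measure_mono) auto
        then have "c * measure M AL \<le> c * cdf M a1" using c unfolding cdf_def by (simp add: mult_left_mono)
        also have "\<dots> = c * m (cdf M a1)" using m_low[of a1] a1z eps by simp
        also have "\<dots> \<le> measure M PL" using pr' unfolding PL_def by simp
        finally show ?thesis .
      qed
      ultimately show ?thesis by (intro exI[of _ PL]) (auto simp: PL_def)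
    qed
    have right: "\<exists>PR. PR \<in> sets M \<and> PR \<subseteq> U - A \<and> PR \<subseteq> {z2<..} \<and> measure M PR \<ge> c * measure M AR"
    proof (cases "AR = {}")
      case True then show ?thesis by (intro exI[of _ "{}"]) auto
    next
      case False
      have ARb: "bdd_below AR" unfolding AR_def by (auto intro: bdd_belowI[of _ z2])
      define a2 where "a2 = Inf AR"
      have z2U: "z2 \<notin> U" using II z(1) by auto
      have a2z: "z2 + \<epsilon> \<le> a2" unfolding a2_def
      proof (rule cInf_greatest[OF False])
        fix a assume "a \<in> AR"
        then have "a \<in> A" "z2 \<le> a" unfolding AR_def by auto
        then show "z2 + \<epsilon> \<le> a" using far[of a z2] z2U by (auto simp: abs_if split: if_splits)
      qed
      have lower: "a2 \<le> a" if "a \<in> AR" for a unfolding a2_def using that ARb by (rule cInf_lower)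
      define PR where "PR = {a2-\<epsilon><..<a2}"
      have "PR \<subseteq> U - A"
      proof
        fix y assume y: "y \<in> PR"
        then have "Inf AR < y + \<epsilon>" unfolding PR_def a2_def by auto
        then obtain a where a: "a \<in> AR" "a < y + \<epsilon>" using cInf_less_iff[OF False ARb] by blast
        then have "\<bar>y - a\<bar> < \<epsilon>" using lower[OF a(1)] y unfolding PR_def by auto
        then have "y \<in> U" using inU a unfolding AR_def by auto
        moreover have "y \<notin> A"
        proof
          assume yA: "y \<in> A"
          show False
          proof (cases "z2 \<le> y")
            case True then have "a2 \<le> y" using lower yA unfolding AR_def by auto
            then show False using y unfolding PR_def by auto
          next
            case False then show False using y a2z unfolding PR_def by auto
          qed
        qed
        ultimately show "y \<in> U - A" by auto
      qed
      moreover have "PR \<subseteq> {z2<..}" unfolding PR_def using a2z by auto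
      moreover have "measure M PR \<ge> c * measure M AR"
      proof -
        have "measure M AR \<le> measure M {a2..}" using lower by (intro finite_measure_mono) auto
        then have "c * measure M AR \<le> c * (1 - cdf M a2)" using c meas_ge[OF noatom] by (simp add: mult_left_mono)
        also have "\<dots> = c * m (cdf M a2)" using m_high[of a2] a2z eps by simp
        also have "\<dots> \<le> measure M PR" using pl' unfolding PR_def by simp
        finally show ?thesis .
      qed
      ultimately show ?thesis by (intro exI[of _ PR]) (auto simp: PR_def)
    qed
    obtain PL where PL: "PL \<in> sets M" "PL \<subseteq> U - A" "PL \<subseteq> {..<z1}" "measure M PL \<ge> c * measure M AL"
      using left by blast
    obtain PR where PR: "PR \<in> sets M" "PR \<subseteq> U - A" "PR \<subseteq> {z2<..}" "measure M PR \<ge> c * measure M AR"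
      using right by blast
    have disj: "PL \<inter> PR = {}"
    proof (rule ccontr)
      assume "PL \<inter> PR \<noteq> {}"
      then obtain x where "x \<in> PL" "x \<in> PR" by blast
      then have "x < z1" "z2 < x" using PL(3) PR(3) by auto
      with z(1) show False by simp
    qed
    have "measure M (PL \<union> PR) = measure M PL + measure M PR"
      using disj PL(1) PR(1) by (simp add: finite_measure_Union)
    moreover have "measure M (PL \<union> PR) \<le> measure M (U - A)"
      using PL(2) PR(2) by (intro finite_measure_mono) auto
    moreover have "measure M A \<le> measure M AL + measure M AR"
    proof -
      have "measure M A \<le> measure M (AL \<union> AR)" using Asub ALm ARm by (intro finite_measure_mono) auto
      also have "\<dots> \<le> measure M AL + measure M AR" using ALm ARm by (intro measure_Un_le) auto
      finally show ?thesis .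
    qed
    ultimately have "measure M (U - A) \<ge> c * measure M A"
      using PL(4) PR(4) c by (smt (verit) distrib_left mult_left_mono)
    moreover have "c * measure M A \<ge> c * t" using tA c by (simp add: mult_left_mono)
    ultimately show ?thesis using fin by linarith
  next
    case I
    have z1U: "z1 \<in> U" using I z(1) by auto
    obtain a where a: "a \<in> A" "\<bar>z1 - a\<bar> < \<epsilon>" using z1U unfolding U_def nbhd_iff by blast
    have nAb: "- A \<in> sets borel" using A by (metis Compl_eq_Diff_UNIV sets.compl_sets space_borel)
    have nA: "- A \<in> sets M" using nAb by simp
    have left: "\<exists>PL QL. PL \<in> sets M \<and> QL \<in> sets M \<and> PL \<subseteq> U - A \<and> PL \<subseteq> {..<a}
        \<and> (- A) \<inter> {..a} \<subseteq> QL \<union> (U - A) \<and> measure M PL \<ge> c * measure M QL"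
    proof (cases "- U \<inter> {..z1} = {}")
      case True
      have "(- A) \<inter> {..a} \<subseteq> U - A"
      proof
        fix y assume y: "y \<in> (- A) \<inter> {..a}"
        have "y \<in> U"
        proof (cases "y \<le> z1")
          case True then show ?thesis using \<open>- U \<inter> {..z1} = {}\<close> by auto
        next
          case False
          then have "\<bar>y - a\<bar> < \<epsilon>" using y a(2) by (auto simp: abs_if)
          then show ?thesis using inU[OF a(1)] by blast
        qed
        then show "y \<in> U - A" using y by auto
      qed
      then show ?thesis by (intro exI[of _ "{}"]) auto
    next
      case False
      define EL where "EL = - U \<inter> {..z1}"
      have ELc: "closed EL" unfolding EL_def using cU by auto
      have ELb: "bdd_above EL" unfolding EL_def by (auto intro: bdd_aboveI[of _ z1])
      define \<alpha> where "\<alpha> = Sup EL"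
      have \<alpha>E: "\<alpha> \<in> EL" unfolding \<alpha>_def using False ELb ELc EL_def closed_contains_Sup by metis
      have \<alpha>U: "\<alpha> \<notin> U" and \<alpha>z: "\<alpha> \<le> z1" using \<alpha>E unfolding EL_def by auto
      have upper: "y \<le> \<alpha>" if "y \<in> EL" for y unfolding \<alpha>_def using that ELb by (rule cSup_upper)
      have a\<alpha>: "\<alpha> < a"
      proof (rule ccontr)
        assume "\<not> \<alpha> < a"
        then have "\<bar>\<alpha> - a\<bar> < \<epsilon>" using \<alpha>z a(2) eps by (auto simp: abs_if)
        then show False using far[OF a(1) \<alpha>U] by simp
      qed
      then have a\<alpha>': "\<alpha> + \<epsilon> \<le> a" using far[OF a(1) \<alpha>U] by (auto simp: abs_if split: if_splits)
      have mid: "y \<in> U" if "\<alpha> < y" "y \<le> a" for y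
      proof (cases "y \<le> z1")
        case True
        then have "y \<notin> EL" using upper that(1) by force
        then show ?thesis using True unfolding EL_def by auto
      next
        case False
        then have "\<bar>y - a\<bar> < \<epsilon>" using that a(2) by (auto simp: abs_if)
        then show ?thesis using inU[OF a(1)] by blast
      qed
      have notA: "y \<notin> A" if "\<bar>y - \<alpha>\<bar> < \<epsilon>" for y using far[of y \<alpha>] \<alpha>U that by (force simp: abs_minus_commute)
      define PL where "PL = {\<alpha><..<\<alpha>+\<epsilon>}"
      have "PL \<subseteq> U - A" unfolding PL_def using mid notA a\<alpha>' by auto
      moreover have "PL \<subseteq> {..<a}" unfolding PL_def using a\<alpha>' by auto
      moreover have "(- A) \<inter> {..a} \<subseteq> {..\<alpha>} \<union> (U - A)" using mid by (auto simp: not_le)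
      moreover have "measure M PL \<ge> c * measure M {..\<alpha>}"
        using pr'[of \<alpha>] m_low[OF \<alpha>z] unfolding PL_def cdf_def by simp
      ultimately show ?thesis by (intro exI[of _ PL] exI[of _ "{..\<alpha>}"]) (auto simp: PL_def)
    qed
    have right: "\<exists>PR QR. PR \<in> sets M \<and> QR \<in> sets M \<and> PR \<subseteq> U - A \<and> PR \<subseteq> {a<..}
        \<and> (- A) \<inter> {a..} \<subseteq> QR \<union> (U - A) \<and> measure M PR \<ge> c * measure M QR"
    proof (cases "- U \<inter> {z2..} = {}")
      case True
      have "(- A) \<inter> {a..} \<subseteq> U - A"
      proof
        fix y assume y: "y \<in> (- A) \<inter> {a..}"
        have "y \<in> U"
        proof (cases "z2 \<le> y")
          case True then show ?thesis using \<open>- U \<inter> {z2..} = {}\<close> by auto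
        next
          case False
          show ?thesis
          proof (cases "z1 \<le> y")
            case True then show ?thesis using I False by auto
          next
            case False
            then have "\<bar>y - a\<bar> < \<epsilon>" using y a(2) by (auto simp: abs_if)
            then show ?thesis using inU[OF a(1)] by blast
          qed
        qed
        then show "y \<in> U - A" using y by auto
      qed
      then show ?thesis by (intro exI[of _ "{}"]) auto
    next
      case False
      define ER where "ER = - U \<inter> {z2..}"
      have ERc: "closed ER" unfolding ER_def using cU by auto
      have ERb: "bdd_below ER" unfolding ER_def by (auto intro: bdd_belowI[of _ z2])
      define \<beta> where "\<beta> = Inf ER"
      have \<beta>E: "\<beta> \<in> ER" unfolding \<beta>_def using False ERb ERc ER_def closed_contains_Inf by metis
      have \<beta>U: "\<beta> \<notin> U" and \<beta>z: "z2 \<le> \<beta>" using \<beta>E unfolding ER_def by auto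
      have lower: "\<beta> \<le> y" if "y \<in> ER" for y unfolding \<beta>_def using that ERb by (rule cInf_lower)
      have a\<beta>: "a < \<beta>"
      proof (rule ccontr)
        assume "\<not> a < \<beta>"
        then have "\<bar>\<beta> - a\<bar> < \<epsilon>" using \<beta>z z(1) a(2) eps by (auto simp: abs_if)
        then show False using far[OF a(1) \<beta>U] by simp
      qed
      then have a\<beta>': "a + \<epsilon> \<le> \<beta>" using far[OF a(1) \<beta>U] by (auto simp: abs_if split: if_splits)
      have mid: "y \<in> U" if "a \<le> y" "y < \<beta>" for y
      proof (cases "z2 \<le> y")
        case True
        then have "y \<notin> ER" using lower that(2) by force
        then show ?thesis using True unfolding ER_def by auto
      next
        case False
        show ?thesis
        proof (cases "z1 \<le> y")
          case True then show ?thesis using I False by auto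
        next
          case False
          then have "\<bar>y - a\<bar> < \<epsilon>" using that a(2) by (auto simp: abs_if)
          then show ?thesis using inU[OF a(1)] by blast
        qed
      qed
      have notA: "y \<notin> A" if "\<bar>y - \<beta>\<bar> < \<epsilon>" for y using far[of y \<beta>] \<beta>U that by (force simp: abs_minus_commute)
      define PR where "PR = {\<beta>-\<epsilon><..<\<beta>}"
      have "PR \<subseteq> U - A" unfolding PR_def using mid notA a\<beta>' by auto
      moreover have "PR \<subseteq> {a<..}" unfolding PR_def using a\<beta>' by auto
      moreover have "(- A) \<inter> {a..} \<subseteq> {\<beta>..} \<union> (U - A)" using mid by (auto simp: not_le)
      moreover have "measure M PR \<ge> c * measure M {\<beta>..}"
        using pl'[of \<beta>] m_high[OF \<beta>z] meas_ge[OF noatom] unfolding PR_def by simp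
      ultimately show ?thesis by (intro exI[of _ PR] exI[of _ "{\<beta>..}"]) (auto simp: PR_def)
    qed
    obtain PL QL where PL: "PL \<in> sets M" "QL \<in> sets M" "PL \<subseteq> U - A" "PL \<subseteq> {..<a}"
        "(- A) \<inter> {..a} \<subseteq> QL \<union> (U - A)" "measure M PL \<ge> c * measure M QL"
      using left by blast
    obtain PR QR where PR: "PR \<in> sets M" "QR \<in> sets M" "PR \<subseteq> U - A" "PR \<subseteq> {a<..}"
        "(- A) \<inter> {a..} \<subseteq> QR \<union> (U - A)" "measure M PR \<ge> c * measure M QR"
      using right by blast
    define X where "X = measure M (U - A)"
    have disj: "PL \<inter> PR = {}"
    proof (rule ccontr)
      assume "PL \<inter> PR \<noteq> {}"
      then obtain x where "x \<in> PL" "x \<in> PR" by blast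
      then have "x < a" "a < x" using PL(4) PR(4) by auto
      then show False by simp
    qed
    have "measure M (PL \<union> PR) = measure M PL + measure M PR"
      using disj PL(1) PR(1) by (simp add: finite_measure_Union)
    moreover have "measure M (PL \<union> PR) \<le> X"
      unfolding X_def using PL(3) PR(3) by (intro finite_measure_mono) auto
    ultimately have X1: "X \<ge> c * (measure M QL + measure M QR)"
      using PL(6) PR(6) by (simp add: distrib_left)
    have "- A \<subseteq> QL \<union> QR \<union> (U - A)"
    proof
      fix x assume x: "x \<in> - A"
      show "x \<in> QL \<union> QR \<union> (U - A)"
      proof (cases "x \<le> a")
        case True then show ?thesis using PL(5) x by blast
      next
        case False then show ?thesis using PR(5) x by auto
      qed
    qed
    then have "measure M (- A) \<le> measure M (QL \<union> QR \<union> (U - A))"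
      using PL(2) PR(2) by (intro finite_measure_mono) auto
    also have "\<dots> \<le> measure M (QL \<union> QR) + X"
      unfolding X_def using PL(2) PR(2) by (intro measure_Un_le) auto
    also have "measure M (QL \<union> QR) \<le> measure M QL + measure M QR"
      using PL(2) PR(2) by (intro measure_Un_le) auto
    finally have X2: "measure M (- A) \<le> measure M QL + measure M QR + X" by simp
    have "measure M (- A) = 1 - measure M A"
      using prob_compl[of A] Am by (simp add: Compl_eq_Diff_UNIV)
    then have "t \<le> measure M QL + measure M QR + X" using X2 tA by simp
    then have "c * t \<le> c * (measure M QL + measure M QR) + c * X" using c
      by (metis distrib_left mult_left_mono)
    then have "c * t \<le> X + c * X" using X1 by simp
    then have "c * t \<le> (1 + c) * X" by (simp add: algebra_simps)
    then show ?thesis unfolding X_def using c by (simp add: divide_le_eq mult.commute)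
  qed
  then show ?thesis unfolding U_def .
qed

end



locale setting =
  fixes \<delta> g :: "real \<Rightarrow> ereal"
  assumes delta_meas: "\<delta> \<in> borel_measurable (restrict_space borel {0..})"
    and delta_nonneg: "\<forall>x\<ge>0. \<delta> x \<ge> 0"
    and g_meas[measurable]: "g \<in> borel_measurable borel"
    and g_not_minf: "\<forall>x. g x \<noteq> -\<infinity>"
    and prob: "prob_space (sigma_g g)"
    and convex: "\<forall>x y. g x \<noteq> \<infinity> \<and> g y \<noteq> \<infinity> \<longrightarrow>
                   (g x + g y) / 2 - g ((x + y) / 2) \<ge> \<delta> \<bar>x - y\<bar>"
begin

lemma midc: "g x \<noteq> \<infinity> \<Longrightarrow> g y \<noteq> \<infinity> \<Longrightarrow> g ((x+y)/2) \<le> (g x + g y)/2"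
proof -
  assume fx: "g x \<noteq> \<infinity>" and fy: "g y \<noteq> \<infinity>"
  obtain X Y where XY: "g x = ereal X" "g y = ereal Y" using fx fy g_not_minf by (metis ereal_cases)
  have "\<delta> \<bar>x - y\<bar> \<ge> 0" using delta_nonneg by simp
  then have "0 \<le> (g x + g y) / 2 - g ((x + y) / 2)" using convex fx fy by (metis order_trans)
  then have h: "0 \<le> ereal ((X + Y)/2) - g ((x + y) / 2)" using XY by simp
  show ?thesis
  proof (cases "g ((x+y)/2)")
    case (real r) then show ?thesis using h XY by simp
  next
    case PInf then show ?thesis using h by simp
  next
    case MInf then show ?thesis by simp
  qed
qed

sublocale mc: midconv g
  using g_not_minf midc by unfold_locales auto

lemma dens_meas[measurable]: "dens g \<in> borel_measurable borel"
  unfolding dens_def by measurable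

lemma sets_sigma[simp]: "sets (sigma_g g) = sets borel"
  unfolding sigma_g_def by simp

lemma rd: "real_distribution (sigma_g g)"
  using prob by (simp add: real_distribution_def real_distribution_axioms_def)

lemma emeasure_sigma: "S \<in> sets borel \<Longrightarrow> emeasure (sigma_g g) S = (\<integral>\<^sup>+x\<in>S. dens g x \<partial>lborel)"
  unfolding sigma_g_def by (simp add: emeasure_density)

lemma noatom: "measure (sigma_g g) {x} = 0"
proof -
  have "emeasure (sigma_g g) {x} = 0"
    by (subst emeasure_sigma) (auto intro!: nn_integral_null_set finite_imp_null_set_lborel)
  then show ?thesis by (simp add: measure_def)
qed

lemma dom_pos: "emeasure lborel {x. g x \<noteq> \<infinity>} \<noteq> 0"
proof
  assume h: "emeasure lborel {x. g x \<noteq> \<infinity>} = 0"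
  have nl: "{x. g x \<noteq> \<infinity>} \<in> null_sets lborel" using h by (intro null_setsI) auto
  have "emeasure (sigma_g g) UNIV = (\<integral>\<^sup>+x. dens g x \<partial>lborel)" by (subst emeasure_sigma) auto
  also have "\<dots> = (\<integral>\<^sup>+x\<in>{x. g x \<noteq> \<infinity>}. dens g x \<partial>lborel)"
    by (intro nn_integral_cong) (auto simp: dens_def indicator_def)
  also have "\<dots> = 0" using nl by (rule nn_integral_null_set)
  finally have "emeasure (sigma_g g) UNIV = 0" .
  moreover have "emeasure (sigma_g g) UNIV = 1"
    using prob_space.emeasure_space_1[OF prob] by (simp add: sigma_g_def)
  ultimately show False by simp
qed

sublocale mb: midconv_b g
proof unfold_locales
  show "\<exists>p r B. r > 0 \<and> (\<forall>y. \<bar>y - p\<bar> < r \<longrightarrow> g y \<le> ereal B)"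
    using initial_ball[OF g_meas] g_not_minf mc.mid_le dom_pos by blast
qed


definition "bad = {x. g x \<noteq> \<infinity> \<and> x \<notin> mc.D}"

lemma subsingleton_finite: "(\<And>x y. x \<in> S \<Longrightarrow> y \<in> S \<Longrightarrow> x = y) \<Longrightarrow> finite S"
proof (cases "S = {}")
  case False
  assume h: "\<And>x y. x \<in> S \<Longrightarrow> y \<in> S \<Longrightarrow> x = y"
  obtain x0 where "x0 \<in> S" using False by blast
  then have "S \<subseteq> {x0}" using h by blast
  then show ?thesis using finite_subset by blast
qed simp

lemma bad_finite: "finite bad"
proof -
  define B1 where "B1 = {x. g x \<noteq> \<infinity> \<and> (\<forall>a<x. g a = \<infinity>)}"
  define B2 where "B2 = {x. g x \<noteq> \<infinity> \<and> (\<forall>b>x. g b = \<infinity>)}"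
  have "bad \<subseteq> B1 \<union> B2" unfolding bad_def B1_def B2_def mc.D_def by auto
  moreover have "finite B1"
  proof (rule subsingleton_finite)
    fix x y assume "x \<in> B1" "y \<in> B1"
    then show "x = y" unfolding B1_def by (cases x y rule: linorder_cases) auto
  qed
  moreover have "finite B2"
  proof (rule subsingleton_finite)
    fix x y assume "x \<in> B2" "y \<in> B2"
    then show "x = y" unfolding B2_def by (cases x y rule: linorder_cases) auto
  qed
  ultimately show ?thesis by (meson finite_UnI finite_subset)
qed

lemma dens_D: "x \<in> mc.D \<Longrightarrow> dens g x = ennreal (exp (- mc.G x))"
  using mb.D_fin unfolding dens_def mc.G_def by simp

lemma mod_gen:
  assumes y: "y \<in> mc.D" and v: "\<forall>z\<in>mc.D. mc.G z \<ge> mc.G y + v * (z - y)" and z: "z \<in> mc.D"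
  shows "\<exists>d. \<delta> \<bar>z - y\<bar> = ereal d \<and> mc.G z \<ge> mc.G y + v * (z-y) + 2 * d"
proof -
  define m where "m = (y + z)/2"
  have mD: "m \<in> mc.D"
    using mc.D_between[OF y z] mc.D_between[OF z y] unfolding m_def by (cases "y \<le> z") auto
  have fy: "g y = ereal (mc.G y)" and fz: "g z = ereal (mc.G z)" and fm: "g m = ereal (mc.G m)"
    using mb.D_fin mc.fin_eq y z mD by auto
  have "\<delta> \<bar>y - z\<bar> \<le> (g y + g z) / 2 - g m"
    using convex mb.D_fin y z unfolding m_def by blast
  then have le: "\<delta> \<bar>z - y\<bar> \<le> ereal ((mc.G y + mc.G z)/2 - mc.G m)"
    using fy fz fm by (simp add: abs_minus_commute)
  have ge: "\<delta> \<bar>z - y\<bar> \<ge> 0" using delta_nonneg by simp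
  obtain d where d: "\<delta> \<bar>z - y\<bar> = ereal d" using le ge by (cases "\<delta> \<bar>z - y\<bar>") auto
  have dle: "d \<le> (mc.G y + mc.G z)/2 - mc.G m" using le d by simp
  have "mc.G m \<ge> mc.G y + v * (m - y)" using v mD by blast
  moreover have "v * (m - y) = (v * (z - y))/2" unfolding m_def by (simp add: algebra_simps)
  ultimately have "mc.G m \<ge> mc.G y + (v * (z - y))/2" by simp
  then have h1: "2 * mc.G m \<ge> 2 * mc.G y + v * (z - y)" by (simp add: field_simps)
  have h2: "2 * d \<le> mc.G y + mc.G z - 2 * mc.G m" using dle by (simp add: field_simps)
  have "mc.G z \<ge> mc.G y + v * (z-y) + 2 * d" using h1 h2 by linarith
  then show ?thesis using d by blast
qed

lemma mod_right:
  assumes y: "y \<in> mc.D" and v: "\<forall>z\<in>mc.D. mc.G z \<ge> mc.G y + v * (z - y)" and s: "s \<ge> 0" and ys: "y + s \<in> mc.D"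
  shows "dens g (y+s) \<le> dens g y * phi_integrand \<delta> (-v) s"
proof -
  obtain d where d: "\<delta> s = ereal d" "mc.G (y+s) \<ge> mc.G y + v * s + 2 * d"
    using mod_gen[OF y v ys] s by auto
  have "dens g y * phi_integrand \<delta> (-v) s = ennreal (exp (- mc.G y)) * ennreal (exp ((-v) * s - 2 * d))"
    using dens_D[OF y] d(1) unfolding phi_integrand_def by simp
  also have "\<dots> = ennreal (exp (- mc.G y - v * s - 2 * d))"
    by (simp add: ennreal_mult''[symmetric] exp_add[symmetric])
  finally have e: "dens g y * phi_integrand \<delta> (-v) s = ennreal (exp (- mc.G y - v * s - 2 * d))" .
  show ?thesis unfolding e dens_D[OF ys] using d(2) by (intro ennreal_leI) simp
qed

lemma mod_left:
  assumes y: "y \<in> mc.D" and v: "\<forall>z\<in>mc.D. mc.G z \<ge> mc.G y + v * (z - y)" and s: "s \<ge> 0" and ys: "y - s \<in> mc.D"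
  shows "dens g (y-s) \<le> dens g y * phi_integrand \<delta> v s"
proof -
  obtain d where d: "\<delta> s = ereal d" "mc.G (y-s) \<ge> mc.G y - v * s + 2 * d"
    using mod_gen[OF y v ys] s by auto
  have "dens g y * phi_integrand \<delta> v s = ennreal (exp (- mc.G y)) * ennreal (exp (v * s - 2 * d))"
    using dens_D[OF y] d(1) unfolding phi_integrand_def by simp
  also have "\<dots> = ennreal (exp (- mc.G y + v * s - 2 * d))"
    by (simp add: ennreal_mult''[symmetric] exp_add[symmetric])
  finally have e: "dens g y * phi_integrand \<delta> v s = ennreal (exp (- mc.G y + v * s - 2 * d))" .
  show ?thesis unfolding e dens_D[OF ys] using d(2) by (intro ennreal_leI) simp
qed


definition "dl s = \<delta> (max 0 s)"

lemma dl_meas[measurable]: "dl \<in> borel_measurable borel"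
proof -
  have "(\<lambda>s::real. max 0 s) \<in> borel \<rightarrow>\<^sub>M restrict_space borel {0..}"
    by (rule measurable_restrict_space2) auto
  then show ?thesis unfolding dl_def using delta_meas by (rule measurable_compose)
qed

lemma pint_meas[measurable]: "phi_integrand dl t \<in> borel_measurable borel"
  unfolding phi_integrand_def by measurable

lemma phi_dl: "phi \<delta> t = (\<integral>\<^sup>+s. phi_integrand dl t s * indicator {0..} s \<partial>lborel)"
  unfolding phi_def by (intro nn_integral_cong) (auto simp: indicator_def phi_integrand_def dl_def)

lemma AE_notbad: "AE s in lborel. y + s \<notin> bad"
proof -
  have "(\<lambda>x. x - y) ` bad \<in> null_sets lborel"
    using bad_finite by (intro finite_imp_null_set_lborel) auto
  then have "AE s in lborel. s \<notin> (\<lambda>x. x - y) ` bad" by (rule AE_not_in)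
  then show ?thesis
  proof eventually_elim
    case (elim s)
    show ?case
    proof
      assume "y + s \<in> bad"
      then have "(y + s) - y \<in> (\<lambda>x. x - y) ` bad" by (rule imageI)
      then show False using elim by simp
    qed
  qed
qed

lemma AE_notbad': "AE s in lborel. y - s \<notin> bad"
proof -
  have "(\<lambda>x. y - x) ` bad \<in> null_sets lborel"
    using bad_finite by (intro finite_imp_null_set_lborel) auto
  then have "AE s in lborel. s \<notin> (\<lambda>x. y - x) ` bad" by (rule AE_not_in)
  then show ?thesis
  proof eventually_elim
    case (elim s)
    show ?case
    proof
      assume "y - s \<in> bad"
      then have "y - (y - s) \<in> (\<lambda>x. y - x) ` bad" by (rule imageI)
      then show False using elim by simp
    qed
  qed
qed

lemma right_mass:
  assumes y: "y \<in> mc.D" and v: "\<forall>z\<in>mc.D. mc.G z \<ge> mc.G y + v * (z - y)"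
  shows "emeasure (sigma_g g) {y..} \<le> dens g y * phi \<delta> (-v)"
proof -
  have "emeasure (sigma_g g) {y..} = (\<integral>\<^sup>+x. dens g x * indicator {y..} x \<partial>lborel)"
    by (subst emeasure_sigma) auto
  also have "\<dots> = ennreal \<bar>1\<bar> * (\<integral>\<^sup>+s. dens g (y + 1 * s) * indicator {y..} (y + 1 * s) \<partial>lborel)"
    by (rule nn_integral_real_affine) auto
  also have "\<dots> = (\<integral>\<^sup>+s. dens g (y + s) * indicator {y..} (y + s) \<partial>lborel)" by simp
  also have "\<dots> \<le> (\<integral>\<^sup>+s. dens g y * (phi_integrand dl (-v) s * indicator {0..} s) \<partial>lborel)"
  proof (rule nn_integral_mono_AE)
    show "AE s in lborel. dens g (y + s) * indicator {y..} (y + s) \<le> dens g y * (phi_integrand dl (-v) s * indicator {0..} s)"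
      using AE_notbad[of y]
    proof eventually_elim
      case (elim s)
      show ?case
      proof (cases "s \<ge> 0")
        case False then show ?thesis by (simp add: indicator_def)
      next
        case True
        show ?thesis
        proof (cases "y + s \<in> mc.D")
          case True
          have "phi_integrand dl (-v) s = phi_integrand \<delta> (-v) s"
            using \<open>s \<ge> 0\<close> by (simp add: phi_integrand_def dl_def)
          then show ?thesis using mod_right[OF y v \<open>s \<ge> 0\<close> True] \<open>s \<ge> 0\<close> by (simp add: indicator_def)
        next
          case False
          then have "g (y + s) = \<infinity>" using elim unfolding bad_def by auto
          then show ?thesis by (simp add: dens_def)
        qed
      qed
    qed
  qed
  also have "\<dots> = dens g y * phi \<delta> (-v)"
    by (subst nn_integral_cmult) (auto simp: phi_dl)
  finally show ?thesis .
qed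

lemma left_mass:
  assumes y: "y \<in> mc.D" and v: "\<forall>z\<in>mc.D. mc.G z \<ge> mc.G y + v * (z - y)"
  shows "emeasure (sigma_g g) {..y} \<le> dens g y * phi \<delta> v"
proof -
  have "emeasure (sigma_g g) {..y} = (\<integral>\<^sup>+x. dens g x * indicator {..y} x \<partial>lborel)"
    by (subst emeasure_sigma) auto
  also have "\<dots> = ennreal \<bar>-1\<bar> * (\<integral>\<^sup>+s. dens g (y + (-1) * s) * indicator {..y} (y + (-1) * s) \<partial>lborel)"
    by (rule nn_integral_real_affine) auto
  also have "\<dots> = (\<integral>\<^sup>+s. dens g (y - s) * indicator {..y} (y - s) \<partial>lborel)" by simp
  also have "\<dots> \<le> (\<integral>\<^sup>+s. dens g y * (phi_integrand dl v s * indicator {0..} s) \<partial>lborel)"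
  proof (rule nn_integral_mono_AE)
    show "AE s in lborel. dens g (y - s) * indicator {..y} (y - s) \<le> dens g y * (phi_integrand dl v s * indicator {0..} s)"
      using AE_notbad'[of y]
    proof eventually_elim
      case (elim s)
      show ?case
      proof (cases "s \<ge> 0")
        case False then show ?thesis by (simp add: indicator_def)
      next
        case True
        show ?thesis
        proof (cases "y - s \<in> mc.D")
          case True
          have "phi_integrand dl v s = phi_integrand \<delta> v s"
            using \<open>s \<ge> 0\<close> by (simp add: phi_integrand_def dl_def)
          then show ?thesis using mod_left[OF y v \<open>s \<ge> 0\<close> True] \<open>s \<ge> 0\<close> by (simp add: indicator_def)
        next
          case False
          then have "g (y - s) = \<infinity>" using elim unfolding bad_def by auto
          then show ?thesis by (simp add: dens_def)
        qed
      qed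
    qed
  qed
  also have "\<dots> = dens g y * phi \<delta> v"
    by (subst nn_integral_cmult) (auto simp: phi_dl)
  finally show ?thesis .
qed

lemma phi_mono: "a \<le> b \<Longrightarrow> phi \<delta> a \<le> phi \<delta> b"
  unfolding phi_def
  by (intro nn_integral_mono) (auto simp: indicator_def phi_integrand_def intro!: ennreal_leI mult_right_mono)

lemma phi_neg: assumes v: "v > 0" shows "phi \<delta> (-v) \<le> ennreal (1/v)"
proof -
  have "phi \<delta> (-v) \<le> (\<integral>\<^sup>+x. ennreal (exp (- x * v)) * indicator {0..} x \<partial>lborel)"
    unfolding phi_def
  proof (intro nn_integral_mono)
    fix x :: real
    show "phi_integrand \<delta> (-v) x * indicator {0..} x \<le> ennreal (exp (- x * v)) * indicator {0..} x"
    proof (cases "x \<ge> 0 \<and> \<delta> x \<noteq> \<infinity>")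
      case True
      then have "real_of_ereal (\<delta> x) \<ge> 0" using delta_nonneg by (simp add: real_of_ereal_pos)
      then show ?thesis using True by (auto simp: phi_integrand_def indicator_def intro!: ennreal_leI)
    next
      case False then show ?thesis by (auto simp: phi_integrand_def indicator_def)
    qed
  qed
  also have "\<dots> = ennreal (1/v)"
  proof -
    have "emeasure (density lborel (\<lambda>x. ennreal (exponential_density v x))) UNIV = 1"
      using prob_space.emeasure_space_1[OF prob_space_exponential_density[OF v]] by simp
    then have "(\<integral>\<^sup>+x. ennreal (exponential_density v x) \<partial>lborel) = 1"
      by (simp add: emeasure_density)
    moreover have "(\<integral>\<^sup>+x. ennreal (exponential_density v x) \<partial>lborel)
        = ennreal v * (\<integral>\<^sup>+x. ennreal (exp (- x * v)) * indicator {0..} x \<partial>lborel)"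
      by (subst nn_integral_cmult[symmetric]) (auto intro!: nn_integral_cong simp: exponential_density_def indicator_def ennreal_mult'' v)
    ultimately have h: "ennreal v * (\<integral>\<^sup>+x. ennreal (exp (- x * v)) * indicator {0..} x \<partial>lborel) = 1" by simp
    have "(\<integral>\<^sup>+x. ennreal (exp (- x * v)) * indicator {0..} x \<partial>lborel)
        = ennreal (1/v) * (ennreal v * (\<integral>\<^sup>+x. ennreal (exp (- x * v)) * indicator {0..} x \<partial>lborel))"
      using v by (simp add: mult.assoc[symmetric] ennreal_mult''[symmetric])
    also have "\<dots> = ennreal (1/v)" using h by simp
    finally show ?thesis .
  qed
  finally show ?thesis .
qed


lemma ennreal_le_prod: "ennreal a \<le> ennreal b * ennreal c \<Longrightarrow> b \<ge> 0 \<Longrightarrow> c \<ge> 0 \<Longrightarrow> a \<le> b * c"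
  by (simp add: ennreal_mult[symmetric])

lemma profile:
  assumes w: "w > 0" and Phi: "phi \<delta> w = ennreal \<Phi>" and Phi0: "\<Phi> \<ge> 0"
    and wt: "2 * w * t * \<Phi> \<le> 1" and t0: "t \<ge> 0"
  shows "ennreal (w * min (cdf (sigma_g g) y) (min t (1 - cdf (sigma_g g) y))) \<le> dens g y"
proof -
  interpret R: real_distribution "sigma_g g" by (rule rd)
  define F where "F = cdf (sigma_g g) y"
  have eL: "emeasure (sigma_g g) {..y} = ennreal F"
    unfolding F_def cdf_def by (simp add: R.emeasure_eq_measure)
  have eR: "emeasure (sigma_g g) {y..} = ennreal (1 - F)"
    unfolding F_def using R.meas_ge[OF noatom] by (simp add: R.emeasure_eq_measure)
  have F01: "0 \<le> F" "F \<le> 1" unfolding F_def using R.cdf_nonneg R.cdf_bounded_prob by auto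
  show ?thesis unfolding F_def[symmetric]
  proof (cases "y \<in> mc.D")
    case True
    obtain v where v: "\<forall>z\<in>mc.D. mc.G z \<ge> mc.G y + v * (z - y)" using mb.support[OF True] by blast
    define fy where "fy = exp (- mc.G y)"
    have fy0: "fy > 0" unfolding fy_def by simp
    have dy: "dens g y = ennreal fy" unfolding fy_def using dens_D[OF True] .
    have RM: "ennreal (1 - F) \<le> ennreal fy * phi \<delta> (-v)" using right_mass[OF True v] eR dy by simp
    have LM: "ennreal F \<le> ennreal fy * phi \<delta> v" using left_mass[OF True v] eL dy by simp
    have "w * min F (min t (1 - F)) \<le> fy"
    proof (cases "\<bar>v\<bar> \<le> w")
      case True
      have p1: "phi \<delta> v \<le> ennreal \<Phi>" and p2: "phi \<delta> (-v) \<le> ennreal \<Phi>"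
        using phi_mono[of v w] phi_mono[of "-v" w] True Phi by auto
      have "ennreal F \<le> ennreal fy * ennreal \<Phi>" by (rule order_trans[OF LM mult_left_mono[OF p1]]) simp
      moreover have "ennreal (1 - F) \<le> ennreal fy * ennreal \<Phi>" by (rule order_trans[OF RM mult_left_mono[OF p2]]) simp
      ultimately have "F \<le> fy * \<Phi>" "1 - F \<le> fy * \<Phi>" using fy0 Phi0 ennreal_le_prod by auto
      then have one: "1 \<le> 2 * fy * \<Phi>" by simp
      then have Ppos: "\<Phi> > 0" using Phi0 fy0 by (cases "\<Phi> = 0") auto
      have "(w * t) * \<Phi> \<le> fy * \<Phi>" using wt one by simp
      then have "w * t \<le> fy" using Ppos by simp
      moreover have "w * min F (min t (1 - F)) \<le> w * t" using w by (simp add: mult_left_mono)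
      ultimately show ?thesis by linarith
    next
      case False
      show ?thesis
      proof (cases "v > w")
        case True
        then have "phi \<delta> (-v) \<le> ennreal (1/v)" using phi_neg w by simp
        then have "ennreal (1 - F) \<le> ennreal fy * ennreal (1/v)"
          by (rule order_trans[OF RM mult_left_mono]) simp
        then have "1 - F \<le> fy * (1/v)" using fy0 True w by (intro ennreal_le_prod) auto
        then have "v * (1 - F) \<le> fy" using True w by (simp add: field_simps)
        moreover have "w * (1 - F) \<le> v * (1 - F)" using True F01 by (simp add: mult_right_mono)
        moreover have "w * min F (min t (1 - F)) \<le> w * (1 - F)" using w by (simp add: mult_left_mono)
        ultimately show ?thesis by linarith
      next
        case False
        then have vn: "-v > w" using \<open>\<not> \<bar>v\<bar> \<le> w\<close> by auto
        then have "phi \<delta> (-(-v)) \<le> ennreal (1/(-v))" using phi_neg w by (intro phi_neg) simp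
        then have "phi \<delta> v \<le> ennreal (1/(-v))" by simp
        then have "ennreal F \<le> ennreal fy * ennreal (1/(-v))"
          by (rule order_trans[OF LM mult_left_mono]) simp
        then have "F \<le> fy * (1/(-v))" using fy0 vn w by (intro ennreal_le_prod) auto
        then have "(-v) * F \<le> fy" using vn w by (simp add: field_simps)
        moreover have "w * F \<le> (-v) * F" using vn F01 by (intro mult_right_mono) auto
        moreover have "w * min F (min t (1 - F)) \<le> w * F" using w by (simp add: mult_left_mono)
        ultimately show ?thesis by linarith
      qed
    qed
    then show "ennreal (w * min F (min t (1 - F))) \<le> dens g y" unfolding dy by (rule ennreal_leI)
  next
    case False
    have "F = 0 \<or> F = 1"
    proof -
      from False consider "\<forall>a<y. g a = \<infinity>" | "\<forall>b>y. g b = \<infinity>"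
        unfolding mc.D_def by blast
      then show ?thesis
      proof cases
        case 1
        have "emeasure (sigma_g g) {..<y} = (\<integral>\<^sup>+x. dens g x * indicator {..<y} x \<partial>lborel)"
          by (subst emeasure_sigma) auto
        also have "\<dots> = (\<integral>\<^sup>+x. 0 \<partial>lborel)"
        proof -
          have "(\<lambda>x. dens g x * indicator {..<y} x) = (\<lambda>x. 0)"
            using 1 by (intro ext) (auto simp: indicator_def dens_def)
          then show ?thesis by simp
        qed
        finally have "measure (sigma_g g) {..<y} = 0" by (simp add: measure_def)
        moreover have "measure (sigma_g g) {..y} = measure (sigma_g g) {..<y} + measure (sigma_g g) {y}"
          by (subst R.finite_measure_Union[symmetric]) (auto intro!: arg_cong[where f="measure (sigma_g g)"])
        ultimately have "F = 0" unfolding F_def cdf_def using noatom by simp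
        then show ?thesis by simp
      next
        case 2
        have "emeasure (sigma_g g) {y<..} = (\<integral>\<^sup>+x. dens g x * indicator {y<..} x \<partial>lborel)"
          by (subst emeasure_sigma) auto
        also have "\<dots> = (\<integral>\<^sup>+x. 0 \<partial>lborel)"
        proof -
          have "(\<lambda>x. dens g x * indicator {y<..} x) = (\<lambda>x. 0)"
            using 2 by (intro ext) (auto simp: indicator_def dens_def)
          then show ?thesis by simp
        qed
        finally have z: "measure (sigma_g g) {y<..} = 0" by (simp add: measure_def)
        have "measure (sigma_g g) {y<..} = measure (sigma_g g) (UNIV - {..y})"
          by (rule arg_cong[where f="measure (sigma_g g)"]) auto
        also have "\<dots> = 1 - F"
          unfolding F_def cdf_def by (subst R.finite_measure_Diff) (auto simp: R.prob_space[unfolded R.space_eq_univ])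
        finally have "F = 1" using z by simp
        then show ?thesis by simp
      qed
    qed
    then have "w * min F (min t (1 - F)) \<le> 0" using w t0 by (auto simp: mult_le_0_iff)
    then have "ennreal (w * min F (min t (1 - F))) = 0" by (simp add: ennreal_eq_0_iff)
    then show "ennreal (w * min F (min t (1 - F))) \<le> dens g y" by simp
  qed
qed

end


context setting
begin

lemma piece_right:
  assumes prof: "\<And>y. ennreal (w * min (cdf (sigma_g g) y) (min t (1 - cdf (sigma_g g) y))) \<le> dens g y"
    and w: "w > 0" and eps: "\<epsilon> > 0"
  shows "measure (sigma_g g) {x<..<x+\<epsilon>} \<ge> (\<epsilon>*w/(1+\<epsilon>*w)) * min (cdf (sigma_g g) x) (min t (1 - cdf (sigma_g g) x))"
proof -
  interpret R: real_distribution "sigma_g g" by (rule rd)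
  define F where "F = cdf (sigma_g g)"
  define P where "P = {x<..<x+\<epsilon>}"
  define sP where "sP = measure (sigma_g g) P"
  define mx where "mx = min (F x) (min t (1 - F x))"
  have sP0: "sP \<ge> 0" unfolding sP_def by simp
  have Fy: "F x \<le> F y \<and> F y \<le> F x + sP" if "y \<in> P" for y
  proof
    show "F x \<le> F y" unfolding F_def using that unfolding P_def by (intro R.cdf_nondecreasing) auto
    have "F y - F x = measure (sigma_g g) {x<..y}" unfolding F_def using that unfolding P_def
      by (intro R.cdf_diff_eq) auto
    also have "\<dots> \<le> sP" unfolding sP_def P_def using that unfolding P_def
      by (intro R.finite_measure_mono) auto
    finally show "F y \<le> F x + sP" by simp
  qed
  have low: "ennreal (w * (mx - sP)) * indicator P y \<le> dens g y * indicator P y" for y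
  proof (cases "y \<in> P")
    case True
    have "mx - sP \<le> min (F y) (min t (1 - F y))" using Fy[OF True] sP0 unfolding mx_def by auto
    then have "ennreal (w * (mx - sP)) \<le> ennreal (w * min (F y) (min t (1 - F y)))"
      using w by (intro ennreal_leI mult_left_mono) auto
    also have "\<dots> \<le> dens g y" using prof unfolding F_def .
    finally show ?thesis using True by simp
  qed simp
  have "ennreal (w * (mx - sP)) * ennreal \<epsilon> = (\<integral>\<^sup>+y. ennreal (w * (mx - sP)) * indicator P y \<partial>lborel)"
    unfolding P_def using eps by (simp add: nn_integral_cmult_indicator)
  also have "\<dots> \<le> (\<integral>\<^sup>+y. dens g y * indicator P y \<partial>lborel)" by (intro nn_integral_mono low)
  also have "\<dots> = emeasure (sigma_g g) P" unfolding P_def by (subst emeasure_sigma) auto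
  also have "\<dots> = ennreal sP" unfolding sP_def by (simp add: R.emeasure_eq_measure)
  finally have key: "ennreal (w * (mx - sP)) * ennreal \<epsilon> \<le> ennreal sP" .
  have "w * (mx - sP) * \<epsilon> \<le> sP"
  proof (cases "w * (mx - sP) \<ge> 0")
    case True
    then have "ennreal (w * (mx - sP) * \<epsilon>) \<le> ennreal sP" using key eps by (simp add: ennreal_mult[symmetric])
    then show ?thesis using sP0 by (simp add: ennreal_le_iff)
  next
    case False
    then have "w * (mx - sP) * \<epsilon> \<le> 0" using eps by (simp add: mult_nonpos_nonneg)
    then show ?thesis using sP0 by linarith
  qed
  then have "\<epsilon> * w * mx \<le> sP * (1 + \<epsilon> * w)" by (simp add: algebra_simps)
  moreover have pos: "1 + \<epsilon> * w > 0" using eps w by (simp add: add_pos_pos)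
  ultimately have "(\<epsilon> * w * mx) / (1 + \<epsilon> * w) \<le> sP" by (simp add: pos_divide_le_eq)
  then have "(\<epsilon> * w / (1 + \<epsilon> * w)) * mx \<le> sP" by simp
  then show ?thesis unfolding sP_def P_def mx_def F_def .
qed

lemma piece_left:
  assumes prof: "\<And>y. ennreal (w * min (cdf (sigma_g g) y) (min t (1 - cdf (sigma_g g) y))) \<le> dens g y"
    and w: "w > 0" and eps: "\<epsilon> > 0"
  shows "measure (sigma_g g) {x-\<epsilon><..<x} \<ge> (\<epsilon>*w/(1+\<epsilon>*w)) * min (cdf (sigma_g g) x) (min t (1 - cdf (sigma_g g) x))"
proof -
  interpret R: real_distribution "sigma_g g" by (rule rd)
  define F where "F = cdf (sigma_g g)"
  define P where "P = {x-\<epsilon><..<x}"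
  define sP where "sP = measure (sigma_g g) P"
  define mx where "mx = min (F x) (min t (1 - F x))"
  have sP0: "sP \<ge> 0" unfolding sP_def by simp
  have Fy: "F y \<le> F x \<and> F x \<le> F y + sP" if "y \<in> P" for y
  proof
    show "F y \<le> F x" unfolding F_def using that unfolding P_def by (intro R.cdf_nondecreasing) auto
    have "F x - F y = measure (sigma_g g) {y<..x}" unfolding F_def using that unfolding P_def
      by (intro R.cdf_diff_eq) auto
    also have "\<dots> \<le> measure (sigma_g g) (P \<union> {x})" using that unfolding P_def
      by (intro R.finite_measure_mono) auto
    also have "\<dots> \<le> measure (sigma_g g) P + measure (sigma_g g) {x}"
      unfolding P_def by (intro measure_Un_le) auto
    also have "\<dots> = sP" unfolding sP_def using noatom by simp
    finally show "F x \<le> F y + sP" by simp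
  qed
  have low: "ennreal (w * (mx - sP)) * indicator P y \<le> dens g y * indicator P y" for y
  proof (cases "y \<in> P")
    case True
    have "mx - sP \<le> min (F y) (min t (1 - F y))" using Fy[OF True] sP0 unfolding mx_def by auto
    then have "ennreal (w * (mx - sP)) \<le> ennreal (w * min (F y) (min t (1 - F y)))"
      using w by (intro ennreal_leI mult_left_mono) auto
    also have "\<dots> \<le> dens g y" using prof unfolding F_def .
    finally show ?thesis using True by simp
  qed simp
  have "ennreal (w * (mx - sP)) * ennreal \<epsilon> = (\<integral>\<^sup>+y. ennreal (w * (mx - sP)) * indicator P y \<partial>lborel)"
    unfolding P_def using eps by (simp add: nn_integral_cmult_indicator)
  also have "\<dots> \<le> (\<integral>\<^sup>+y. dens g y * indicator P y \<partial>lborel)" by (intro nn_integral_mono low)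
  also have "\<dots> = emeasure (sigma_g g) P" unfolding P_def by (subst emeasure_sigma) auto
  also have "\<dots> = ennreal sP" unfolding sP_def by (simp add: R.emeasure_eq_measure)
  finally have key: "ennreal (w * (mx - sP)) * ennreal \<epsilon> \<le> ennreal sP" .
  have "w * (mx - sP) * \<epsilon> \<le> sP"
  proof (cases "w * (mx - sP) \<ge> 0")
    case True
    then have "ennreal (w * (mx - sP) * \<epsilon>) \<le> ennreal sP" using key eps by (simp add: ennreal_mult[symmetric])
    then show ?thesis using sP0 by (simp add: ennreal_le_iff)
  next
    case False
    then have "w * (mx - sP) * \<epsilon> \<le> 0" using eps by (simp add: mult_nonpos_nonneg)
    then show ?thesis using sP0 by linarith
  qed
  then have "\<epsilon> * w * mx \<le> sP * (1 + \<epsilon> * w)" by (simp add: algebra_simps)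
  moreover have pos: "1 + \<epsilon> * w > 0" using eps w by (simp add: add_pos_pos)
  ultimately have "(\<epsilon> * w * mx) / (1 + \<epsilon> * w) \<le> sP" by (simp add: pos_divide_le_eq)
  then have "(\<epsilon> * w / (1 + \<epsilon> * w)) * mx \<le> sP" by simp
  then show ?thesis unfolding sP_def P_def mx_def F_def .
qed

end

theorem mainTheorem18:
  fixes \<delta> :: "real \<Rightarrow> ereal" and g :: "real \<Rightarrow> ereal" and A :: "real set"
  assumes delta_meas: "\<delta> \<in> borel_measurable (restrict_space borel {0..})"
    and delta_nonneg: "\<forall>x\<ge>0. \<delta> x \<ge> 0"
    and phi_finite: "\<forall>t. phi \<delta> t < \<infinity>"
    and g_meas: "g \<in> borel_measurable borel"
    and g_not_minf: "\<forall>x. g x \<noteq> -\<infinity>"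
    and prob: "prob_space (sigma_g g)"
    and convex: "\<forall>x y. g x \<noteq> \<infinity> \<and> g y \<noteq> \<infinity> \<longrightarrow>
                   (g x + g y) / 2 - g ((x + y) / 2) \<ge> \<delta> \<bar>x - y\<bar>"
    and A_borel: "A \<in> sets borel"
  shows "\<forall>u\<ge>0. psi \<delta> u = 1 / (2 * tilde (measure (sigma_g g) A)) \<longrightarrow>
           boundary_measure (sigma_g g) A \<ge> ereal (tilde (measure (sigma_g g) A) * u)"
proof (intro allI impI)
  fix u :: real
  assume u0: "u \<ge> 0" and hpsi: "psi \<delta> u = 1 / (2 * tilde (measure (sigma_g g) A))"
  interpret S: setting \<delta> g
    by (rule setting.intro[OF delta_meas delta_nonneg g_meas g_not_minf prob convex])
  interpret R: real_distribution "sigma_g g" by (rule S.rd)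
  define p where "p = measure (sigma_g g) A"
  define t where "t = tilde p"
  have p01: "0 \<le> p" "p \<le> 1" unfolding p_def by auto
  have t0: "t \<ge> 0" and tp: "t \<le> p" "t \<le> 1 - p" unfolding t_def tilde_def using p01 by auto
  define Q where "Q \<epsilon> = (measure (sigma_g g) (nbhd A \<epsilon>) - p) / \<epsilon>" for \<epsilon>
  have nbm: "nbhd A \<epsilon> \<in> sets borel" for \<epsilon> using nbhd_open by auto
  have Qeq: "Q \<epsilon> = measure (sigma_g g) (nbhd A \<epsilon> - A) / \<epsilon>" if "\<epsilon> > 0" for \<epsilon>
  proof -
    have "A \<subseteq> nbhd A \<epsilon>"
    proof
      fix x assume "x \<in> A" then show "x \<in> nbhd A \<epsilon>" unfolding nbhd_iff using that by (intro bexI[of _ x]) auto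
    qed
    then have "measure (sigma_g g) (nbhd A \<epsilon> - A) = measure (sigma_g g) (nbhd A \<epsilon>) - p"
      unfolding p_def using nbm A_borel by (intro R.finite_measure_Diff) auto
    then show ?thesis unfolding Q_def by simp
  qed
  have evpos: "eventually (\<lambda>\<epsilon>::real. \<epsilon> > 0) (at_right 0)"
    by (simp add: eventually_at_right_less)
  have bm: "boundary_measure (sigma_g g) A = Liminf (at_right 0) (\<lambda>\<epsilon>. ereal (Q \<epsilon>))"
    unfolding boundary_measure_def Q_def p_def ..
  show "boundary_measure (sigma_g g) A \<ge> ereal (tilde (measure (sigma_g g) A) * u)"
  proof (cases "t = 0")
    case True
    have "\<forall>\<^sub>F \<epsilon> in at_right 0. ereal 0 \<le> ereal (Q \<epsilon>)"
      using evpos by eventually_elim (simp add: Qeq)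
    then have "ereal 0 \<le> Liminf (at_right 0) (\<lambda>\<epsilon>. ereal (Q \<epsilon>))" by (rule Liminf_bounded)
    then show ?thesis using bm True unfolding t_def p_def by simp
  next
    case False
    then have tpos: "t > 0" using t0 by simp
    define \<Phi> where "\<Phi> = enn2real (phi \<delta> u)"
    have Phi: "phi \<delta> u = ennreal \<Phi>" unfolding \<Phi>_def using phi_finite by (simp add: ennreal_enn2real)
    have Phi0: "\<Phi> \<ge> 0" unfolding \<Phi>_def by simp
    have "u * \<Phi> = 1 / (2 * t)" using hpsi unfolding psi_def \<Phi>_def t_def p_def .
    then have key: "2 * t * (u * \<Phi>) = 1" using tpos by (simp add: field_simps)
    then have upos: "u > 0" using u0 by (cases "u = 0") auto
    have wt: "2 * u * t * \<Phi> \<le> 1" using key by (simp add: algebra_simps)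
    have prof: "\<And>y. ennreal (u * min (cdf (sigma_g g) y) (min t (1 - cdf (sigma_g g) y))) \<le> dens g y"
      using S.profile[OF upos Phi Phi0 wt t0] .
    have t2: "t \<le> 1 - t" using tp by simp
    have cont: "continuous_on UNIV (cdf (sigma_g g))"
      using R.isCont_cdf S.noatom by (intro continuous_at_imp_continuous_on) auto
    have "eventually (\<lambda>x. cdf (sigma_g g) x < t) at_bot"
      using R.cdf_lim_at_bot tpos by (rule order_tendstoD)
    then obtain x0 where x0: "cdf (sigma_g g) x0 < t" unfolding eventually_at_bot_linorder by blast
    have "eventually (\<lambda>x. cdf (sigma_g g) x > 1 - t) at_top"
      using R.cdf_lim_at_top_prob tpos by (intro order_tendstoD) auto
    then obtain x1 where x1: "cdf (sigma_g g) x1 > 1 - t" unfolding eventually_at_top_linorder by blast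
    have x01: "x0 \<le> x1"
    proof (rule ccontr)
      assume "\<not> x0 \<le> x1"
      then have "cdf (sigma_g g) x1 \<le> cdf (sigma_g g) x0" by (intro R.cdf_nondecreasing) auto
      with x0 x1 t2 show False by simp
    qed
    obtain z1 where z1: "x0 \<le> z1" "z1 \<le> x1" "cdf (sigma_g g) z1 = t"
      using IVT'[of "cdf (sigma_g g)" x0 t x1] x0 x1 t2 x01 continuous_on_subset[OF cont] by force
    obtain z2 where z2: "z1 \<le> z2" "z2 \<le> x1" "cdf (sigma_g g) z2 = 1 - t"
      using IVT'[of "cdf (sigma_g g)" z1 "1 - t" x1] z1 x1 t2 continuous_on_subset[OF cont] by force
    have lowQ: "Q \<epsilon> \<ge> u * t / (1 + 2 * \<epsilon> * u)" if eps: "\<epsilon> > 0" for \<epsilon>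
    proof -
      define c where "c = \<epsilon> * u / (1 + \<epsilon> * u)"
      have c0: "c \<ge> 0" unfolding c_def using eps upos by simp
      have "measure (sigma_g g) (nbhd A \<epsilon> - A) \<ge> c * t / (1 + c)"
        using R.set_arg[OF A_borel eps c0 S.noatom, of t z1 z2]
          S.piece_right[OF prof upos eps] S.piece_left[OF prof upos eps]
          z1(3) z2 tp unfolding c_def p_def by auto
      moreover have "c * t / (1 + c) = \<epsilon> * (u * t / (1 + 2 * \<epsilon> * u))"
      proof -
        have p1: "1 + \<epsilon> * u > 0" using eps upos by (simp add: add_pos_pos)
        have p2: "1 + 2 * \<epsilon> * u > 0" using eps upos by (simp add: add_pos_pos)
        have "1 + c = (1 + 2 * \<epsilon> * u) / (1 + \<epsilon> * u)" unfolding c_def using p1 by (simp add: field_simps)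
        then have "c / (1 + c) = \<epsilon> * u / (1 + 2 * \<epsilon> * u)" unfolding c_def using p1 p2 by simp
        then show ?thesis by (metis (no_types, lifting) times_divide_eq_left times_divide_eq_right mult.commute mult.left_commute)
      qed
      ultimately have "\<epsilon> * (u * t / (1 + 2 * \<epsilon> * u)) \<le> measure (sigma_g g) (nbhd A \<epsilon> - A)" by simp
      then show ?thesis unfolding Qeq[OF eps] using eps by (simp add: pos_le_divide_eq mult.commute)
    qed
    have lim: "((\<lambda>\<epsilon>. ereal (u * t / (1 + 2 * \<epsilon> * u))) \<longlongrightarrow> ereal (u * t / (1 + 2 * 0 * u))) (at_right 0)"
      by (intro tendsto_intros tendsto_ereal) (auto intro!: tendsto_intros)
    have "Liminf (at_right 0) (\<lambda>\<epsilon>. ereal (u * t / (1 + 2 * \<epsilon> * u))) = ereal (u * t)"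
      using lim by (subst lim_imp_Liminf) auto
    moreover have "Liminf (at_right 0) (\<lambda>\<epsilon>. ereal (u * t / (1 + 2 * \<epsilon> * u))) \<le> Liminf (at_right 0) (\<lambda>\<epsilon>. ereal (Q \<epsilon>))"
    proof (rule Liminf_mono)
      show "\<forall>\<^sub>F \<epsilon> in at_right 0. ereal (u * t / (1 + 2 * \<epsilon> * u)) \<le> ereal (Q \<epsilon>)"
        using evpos by eventually_elim (simp add: lowQ)
    qed
    ultimately show ?thesis using bm unfolding t_def p_def by (simp add: mult.commute)
  qed
qed


end
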